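(* Let $P\ge 2$ be an integer, $m\in(-1,1)$, $\rho_o$ a real number such that $C^{out}=\rho_o\mathbf{1}\mathbf{1}^T+(1-\rho_o)I$ is positive semi-definite, and let $\delta_m>0$. Let $\delta M$ be a collection of real numbers $\delta M_{\mu\nu}$, $1\le\mu<\nu\le P$, with $|\delta M_{\mu\nu}|<\delta_m$, such that the symmetric matrix $C^{in}$ with $C^{in}_{\mu\mu}=1$ and $C^{in}_{\mu\nu}=C^{in}_{\nu\mu}=m+\delta M_{\mu\nu}$ for $\mu<\nu$ is a correlation matrix. Define $$\bar\epsilon_f[C^{in},C^{out}]=\left\lVert (C^{out})^{1/2}\left(I-(I+C^{in,U})^{-1}C^{in}\right)\right\rVert_F^2,$$ where $C^{in,U}$ is the strictly upper-triangular part of $C^{in}$ and $(C^{out})^{1/2}$ is the positive semi-definite square root of $C^{out}$, and let $\bar\epsilon_f[m,\rho_o]$ denote this quantity when all $\delta M_{\mu\nu}=0$. Then there are coefficients $G_{\mu\nu}$ depending only on $m$, $\rho_o$ and $P$ such that $$\bar\epsilon_f[C^{in},C^{out}]=\bar\epsilon_f[m,\rho_o]+2\sum_{\mu=1}^P\sum_{\nu=\mu+1}^P G_{\mu\nu}\,\delta M_{\mu\nu}+\mathcal{O}(\delta_m^2)\quad(\delta_m\to 0),$$ and, when $\rho_o=1$, $G_{\mu\nu}=G^+_{\mu\nu}+G^-_{\mu\nu}$ with $$G^+_{\mu\nu}=-(1-m)^{P+\mu-1}-(1-m)^{P+\nu-1}+\tfrac{3-m}{2-m}(1-m)^{\mu+\nu-1},$$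 $$G^-_{\mu\nu}=-\left(1-(1-m)^P\left(\tfrac{mP}{1-m}+\tfrac{3-m}{2-m}\right)\right)(1-m)^{P-(\nu-\mu)}.$$
   Context: $\mathbf{1}$ is the all-ones vector in $\mathbb{R}^P$, $I$ the $P\times P$ identity, and $\lVert\cdot\rVert_F$ the Frobenius norm. The function $\bar\epsilon_f[C^{in},C^{out}]$ is the asymptotic average final error of sequential (task-incremental) learning of $P$ linear regression tasks in a linear teacher–student model with input and output task-correlation matrices $C^{in}$, $C^{out}$, tasks learned in the order $1,\dots,P$. *)

theory Defs
  imports "Jordan_Normal_Form.Matrix"
begin

text \<open>All matrices are P x P real matrices (Jordan_Normal_Form type 'a mat, 0-based
  entries).  Task indices mu, nu of the paper (1-based) correspond to entries mu-1, nu-1.\<close>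

definition psd_mat :: "nat \<Rightarrow> real mat \<Rightarrow> bool" where
  "psd_mat n A \<longleftrightarrow> A \<in> carrier_mat n n \<and> transpose_mat A = A \<and>
     (\<forall>v \<in> carrier_vec n. v \<bullet> (A *\<^sub>v v) \<ge> 0)"

definition correlation_mat :: "nat \<Rightarrow> real mat \<Rightarrow> bool" where
  "correlation_mat n A \<longleftrightarrow> psd_mat n A \<and> (\<forall>i<n. A $$ (i,i) = 1)"

definition psd_sqrt :: "nat \<Rightarrow> real mat \<Rightarrow> real mat" where
  "psd_sqrt n A = (THE S. psd_mat n S \<and> S * S = A)"

definition mat_inv :: "nat \<Rightarrow> real mat \<Rightarrow> real mat" where
  "mat_inv n A = (THE B. B \<in> carrier_mat n n \<and> B * A = 1\<^sub>m n \<and> A * B = 1\<^sub>m n)"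

definition strict_upper :: "real mat \<Rightarrow> real mat" where
  "strict_upper A = mat (dim_row A) (dim_col A) (\<lambda>(i,j). if i < j then A $$ (i,j) else 0)"

definition frob_sq :: "real mat \<Rightarrow> real" where
  "frob_sq A = (\<Sum>i<dim_row A. \<Sum>j<dim_col A. (A $$ (i,j))^2)"

definition eps_f :: "nat \<Rightarrow> real mat \<Rightarrow> real mat \<Rightarrow> real" where
  "eps_f P Cin Cout =
     frob_sq (psd_sqrt P Cout * (1\<^sub>m P - mat_inv P (1\<^sub>m P + strict_upper Cin) * Cin))"

definition Cout_mat :: "nat \<Rightarrow> real \<Rightarrow> real mat" where
  "Cout_mat P \<rho> = mat P P (\<lambda>(i,j). if i = j then 1 else \<rho>)"

definition Cin_mat :: "nat \<Rightarrow> real \<Rightarrow> (nat \<Rightarrow> nat \<Rightarrow> real) \<Rightarrow> real mat" where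
  "Cin_mat P m dM = mat P P (\<lambda>(i,j). if i = j then 1
      else if i < j then m + dM (i+1) (j+1) else m + dM (j+1) (i+1))"

end

theory Submission
  imports Defs "Jordan_Normal_Form.Determinant"
begin

lemma mat_inv_eq:
  assumes A: "A \<in> carrier_mat n n" and B: "B \<in> carrier_mat n n"
    and BA: "B * A = 1\<^sub>m n" and AB: "A * B = 1\<^sub>m n"
  shows "mat_inv n A = B"
  unfolding mat_inv_def
proof (rule the_equality)
  show "B \<in> carrier_mat n n \<and> B * A = 1\<^sub>m n \<and> A * B = 1\<^sub>m n" using assms by auto
next
  fix B' assume h: "B' \<in> carrier_mat n n \<and> B' * A = 1\<^sub>m n \<and> A * B' = 1\<^sub>m n"
  have "B' = B' * (A * B)" using AB h by (metis right_mult_one_mat)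
  also have "\<dots> = (B' * A) * B" by (rule assoc_mult_mat[symmetric]) (use h A B in auto)
  also have "\<dots> = B" using h B by simp
  finally show "B' = B" .
qed

lemma inv_exists:
  fixes A :: "real mat"
  assumes A: "A \<in> carrier_mat n n" and d: "det A \<noteq> 0"
  shows "\<exists>B. B \<in> carrier_mat n n \<and> B * A = 1\<^sub>m n \<and> A * B = 1\<^sub>m n"
proof -
  have "A \<in> Units (ring_mat TYPE(real) n ())" by (rule det_non_zero_imp_unit[OF A d])
  then show ?thesis unfolding Units_def ring_mat_def by auto
qed

lemma su_carrier[simp]: "C \<in> carrier_mat n n \<Longrightarrow> strict_upper C \<in> carrier_mat n n"
  unfolding strict_upper_def by auto

lemma su_index[simp]: "i < dim_row C \<Longrightarrow> j < dim_col C \<Longrightarrow>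
   strict_upper C $$ (i,j) = (if i < j then C $$ (i,j) else 0)"
  unfolding strict_upper_def by auto

lemma su_dims[simp]: "dim_row (strict_upper C) = dim_row C" "dim_col (strict_upper C) = dim_col C"
  unfolding strict_upper_def by auto

lemma inv_upper_exists:
  fixes C :: "real mat"
  assumes C: "C \<in> carrier_mat n n"
  shows "\<exists>B. B \<in> carrier_mat n n \<and> B * (1\<^sub>m n + strict_upper C) = 1\<^sub>m n
     \<and> (1\<^sub>m n + strict_upper C) * B = 1\<^sub>m n"
proof -
  let ?A = "1\<^sub>m n + strict_upper C"
  have Ac: "?A \<in> carrier_mat n n" using C by simp
  have ut: "upper_triangular ?A"
    using C by (intro upper_triangularI) auto
  have "det ?A = prod_list (diag_mat ?A)" by (rule det_upper_triangular[OF ut Ac])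
  also have "\<dots> = (\<Prod>i = 0..<n. ?A $$ (i,i))" unfolding prod_list_diag_prod using C by simp
  also have "\<dots> = 1" using C by (intro prod.neutral) auto
  finally show ?thesis using inv_exists[OF Ac] by simp
qed

lemma Cin_carrier[simp]: "Cin_mat P m dM \<in> carrier_mat P P"
  unfolding Cin_mat_def by simp
lemma Cin_dims[simp]: "dim_row (Cin_mat P m dM) = P" "dim_col (Cin_mat P m dM) = P"
  unfolding Cin_mat_def by simp_all
lemma Cin_index[simp]: "i < P \<Longrightarrow> j < P \<Longrightarrow> Cin_mat P m dM $$ (i,j) = (if i = j then 1
      else if i < j then m + dM (i+1) (j+1) else m + dM (j+1) (i+1))"
  unfolding Cin_mat_def by simp

lemma mv_index: "A \<in> carrier_mat n n \<Longrightarrow> v \<in> carrier_vec n \<Longrightarrow> i < n \<Longrightarrow> (A *\<^sub>v v) $ i = (\<Sum>j<n. A $$ (i,j) * v $ j)"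
  by (simp add: scalar_prod_def lessThan_atLeast0 mult.commute)

lemma mm_index: "A \<in> carrier_mat n n \<Longrightarrow> B \<in> carrier_mat n n \<Longrightarrow> i < n \<Longrightarrow> j < n \<Longrightarrow>
   (A * B) $$ (i,j) = (\<Sum>k<n. A $$ (i,k) * B $$ (k,j))"
  by (simp add: scalar_prod_def lessThan_atLeast0)

lemma sp_sum: "w \<in> carrier_vec n \<Longrightarrow> v \<bullet> w = (\<Sum>i<n. v $ i * w $ i)"
  by (simp add: scalar_prod_def lessThan_atLeast0)

lemma psd_sum:
  fixes S :: "real mat"
  assumes "psd_mat n S"
  shows "0 \<le> (\<Sum>i<n. f i * (\<Sum>j<n. S $$ (i,j) * f j))"
proof -
  have S: "S \<in> carrier_mat n n" using assms unfolding psd_mat_def by auto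
  have "0 \<le> vec n f \<bullet> (S *\<^sub>v vec n f)" using assms unfolding psd_mat_def by auto
  also have "\<dots> = (\<Sum>i<n. f i * (\<Sum>j<n. S $$ (i,j) * f j))"
    using S by (simp add: sp_sum[of _ n] mv_index)
  finally show ?thesis .
qed

lemma psd_sym:
  assumes "psd_mat n S" "i < n" "j < n"
  shows "S $$ (i,j) = S $$ (j,i)"
proof -
  have "transpose_mat S = S" "S \<in> carrier_mat n n" using assms unfolding psd_mat_def by auto
  then show ?thesis using assms by (metis carrier_matD index_transpose_mat(1))
qed

lemma root_apply:
  fixes S A :: "real mat"
  assumes psd: "psd_mat n S" and SS: "S * S = A" and lam: "l \<ge> 0"
    and eig: "\<And>i. i < n \<Longrightarrow> (\<Sum>j<n. A $$ (i,j) * v j) = l * v i"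
    and i: "i < n"
  shows "(\<Sum>j<n. S $$ (i,j) * v j) = sqrt l * v i"
proof -
  have S: "S \<in> carrier_mat n n" using psd unfolding psd_mat_def by auto
  define u where "u i = (\<Sum>j<n. S $$ (i,j) * v j)" for i
  define w where "w i = u i - sqrt l * v i" for i
  have SSe: "(\<Sum>k<n. S $$ (i,k) * S $$ (k,j)) = A $$ (i,j)" if "i < n" "j < n" for i j
    using mm_index[OF S S that] SS by simp
  have Su: "(\<Sum>j<n. S $$ (i,j) * u j) = l * v i" if "i < n" for i
  proof -
    have "(\<Sum>j<n. S $$ (i,j) * u j) = (\<Sum>j<n. \<Sum>k<n. S $$ (i,j) * S $$ (j,k) * v k)"
      unfolding u_def by (simp add: sum_distrib_left mult.assoc)
    also have "\<dots> = (\<Sum>k<n. \<Sum>j<n. S $$ (i,j) * S $$ (j,k) * v k)" by (rule sum.swap)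
    also have "\<dots> = (\<Sum>k<n. A $$ (i,k) * v k)"
      using SSe[OF that] by (simp add: sum_distrib_right[symmetric])
    finally show ?thesis using eig[OF that] by simp
  qed
  have Sw: "(\<Sum>j<n. S $$ (i,j) * w j) = - sqrt l * w i" if "i < n" for i
  proof -
    have "(\<Sum>j<n. S $$ (i,j) * w j) = (\<Sum>j<n. S $$ (i,j) * u j) - sqrt l * u i"
      unfolding w_def u_def by (simp add: algebra_simps sum_subtractf sum_distrib_left)
    also have "\<dots> = - sqrt l * w i" using Su[OF that] lam unfolding w_def
      by (simp add: algebra_simps)
    finally show ?thesis .
  qed
  have "0 \<le> (\<Sum>i<n. w i * (\<Sum>j<n. S $$ (i,j) * w j))" by (rule psd_sum[OF psd])
  also have "\<dots> = - sqrt l * (\<Sum>i<n. (w i)^2)"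
    using Sw by (simp add: sum_distrib_left power2_eq_square algebra_simps)
  finally have ineq: "0 \<le> - sqrt l * (\<Sum>i<n. (w i)^2)" .
  show ?thesis
  proof (cases "l > 0")
    case True
    have "sqrt l > 0" using True by simp
    then have "(\<Sum>i<n. (w i)^2) \<le> 0" using ineq
      by (simp add: mult_le_0_iff)
    moreover have "(\<Sum>i<n. (w i)^2) \<ge> 0" by (intro sum_nonneg) auto
    ultimately have "(\<Sum>i<n. (w i)^2) = 0" by linarith
    then have "w i = 0" using i by (simp add: sum_nonneg_eq_0_iff)
    then show ?thesis unfolding w_def u_def by simp
  next
    case False
    then have l0: "l = 0" using lam by simp
    have Su0: "(\<Sum>j<n. S $$ (j,i) * u j) = 0" if "i < n" for i
      using Su[OF that] l0 psd_sym[OF psd that] by (simp add: psd_sym[OF psd])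
    have "(\<Sum>i<n. (u i)^2) = (\<Sum>i<n. \<Sum>j<n. u i * S $$ (i,j) * v j)"
      unfolding power2_eq_square by (intro sum.cong refl, subst (2) u_def) (simp add: sum_distrib_left mult.assoc)
    also have "\<dots> = (\<Sum>j<n. \<Sum>i<n. u i * S $$ (i,j) * v j)" by (rule sum.swap)
    also have "\<dots> = (\<Sum>j<n. v j * (\<Sum>i<n. S $$ (i,j) * u i))"
      by (intro sum.cong refl) (simp add: sum_distrib_left mult_ac)
    also have "\<dots> = 0" using Su0 by (simp add: mult.commute)
    finally have "(\<Sum>i<n. (u i)^2) = 0" .
    then have "u i = 0" using i by (simp add: sum_nonneg_eq_0_iff)
    then show ?thesis using l0 unfolding u_def by simp
  qed
qed

lemma Cout_carrier[simp]: "Cout_mat P r \<in> carrier_mat P P"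
  unfolding Cout_mat_def by simp
lemma Cout_dims[simp]: "dim_row (Cout_mat P r) = P" "dim_col (Cout_mat P r) = P"
  unfolding Cout_mat_def by simp_all
lemma Cout_index: "i < P \<Longrightarrow> j < P \<Longrightarrow> Cout_mat P r $$ (i,j) = r + (if i = j then 1 - r else 0)"
  unfolding Cout_mat_def by simp

lemma Cout_apply: "k < P \<Longrightarrow> (\<Sum>l<P. Cout_mat P r $$ (k,l) * x l) = r * (\<Sum>l<P. x l) + (1 - r) * x k"
proof -
  assume k: "k < P"
  have "(\<Sum>l<P. Cout_mat P r $$ (k,l) * x l) = (\<Sum>l<P. r * x l + (if k = l then (1 - r) * x l else 0))"
    using k by (intro sum.cong refl) (auto simp: algebra_simps Cout_index)
  also have "\<dots> = r * (\<Sum>l<P. x l) + (1 - r) * x k" using k by (simp add: sum.distrib sum_distrib_left)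
  finally show ?thesis .
qed

lemma Cout_quad: "(\<Sum>i<P. f i * (\<Sum>j<P. Cout_mat P r $$ (i,j) * f j)) = r * (\<Sum>i<P. f i)^2 + (1 - r) * (\<Sum>i<P. (f i)^2)"
proof -
  have "(\<Sum>i<P. f i * (\<Sum>j<P. Cout_mat P r $$ (i,j) * f j)) = (\<Sum>i<P. f i * (r * (\<Sum>l<P. f l) + (1 - r) * f i))"
    by (intro sum.cong refl) (simp add: Cout_apply)
  also have "\<dots> = (\<Sum>i<P. (r * (\<Sum>l<P. f l)) * f i + (1 - r) * (f i)^2)"
    by (intro sum.cong refl) (simp add: algebra_simps power2_eq_square)
  also have "\<dots> = r * (\<Sum>i<P. f i)^2 + (1 - r) * (\<Sum>i<P. (f i)^2)"
    by (simp add: sum.distrib sum_distrib_left[symmetric] power2_eq_square)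
  finally show ?thesis .
qed

lemma Cout_lams:
  assumes P: "P \<ge> 2" and psd: "psd_mat P (Cout_mat P r)"
  shows "1 - r \<ge> 0" "1 + (real P - 1) * r \<ge> 0"
proof -
  have "0 \<le> r * (\<Sum>i<P. (1::real))^2 + (1 - r) * (\<Sum>i<P. (1::real)^2)"
    using psd_sum[OF psd, of "\<lambda>_. 1", unfolded Cout_quad] by simp
  then have "0 \<le> real P * (1 + (real P - 1) * r)" by (simp add: power2_eq_square algebra_simps)
  then show "1 + (real P - 1) * r \<ge> 0" using P by (simp add: zero_le_mult_iff)
  define f :: "nat \<Rightarrow> real" where "f i = (if i = 0 then 1 else 0) - (if i = 1 then 1 else 0)" for i
  have s1: "(\<Sum>i<P. f i) = 0" using P unfolding f_def by (simp add: sum_subtractf)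
  have sq: "(f i)^2 = (if i = 0 then 1 else 0) + (if i = 1 then 1 else 0)" for i
    unfolding f_def by auto
  have s2: "(\<Sum>i<P. (f i)^2) = 2" using P unfolding sq by (simp add: sum.distrib)
  have "0 \<le> r * (\<Sum>i<P. f i)^2 + (1 - r) * (\<Sum>i<P. (f i)^2)"
    using psd_sum[OF psd, of f, unfolded Cout_quad] by simp
  then show "1 - r \<ge> 0" using s1 s2 by simp
qed

definition Tm :: "nat \<Rightarrow> real \<Rightarrow> real mat" where
  "Tm P r = mat P P (\<lambda>(i,j). (sqrt (1 + (real P - 1) * r) - sqrt (1 - r)) / real P
      + (if i = j then sqrt (1 - r) else 0))"

lemma Tm_carrier[simp]: "Tm P r \<in> carrier_mat P P" unfolding Tm_def by simp
lemma Tm_dims[simp]: "dim_row (Tm P r) = P" "dim_col (Tm P r) = P" unfolding Tm_def by simp_all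
lemma Tm_index: "i < P \<Longrightarrow> j < P \<Longrightarrow> Tm P r $$ (i,j) = (sqrt (1 + (real P - 1) * r) - sqrt (1 - r)) / real P
      + (if i = j then sqrt (1 - r) else 0)" unfolding Tm_def by simp

lemma lin_apply: "(k::nat) < P \<Longrightarrow> (\<Sum>l<P. (\<alpha> + (if k = l then \<beta> else 0)) * x l) = \<alpha> * (\<Sum>l<P. x l) + \<beta> * (x k :: real)"
proof -
  assume k: "k < P"
  have "(\<Sum>l<P. (\<alpha> + (if k = l then \<beta> else 0)) * x l) = (\<Sum>l<P. \<alpha> * x l + (if k = l then \<beta> * x l else 0))"
    by (intro sum.cong refl) (auto simp: algebra_simps)
  also have "\<dots> = \<alpha> * (\<Sum>l<P. x l) + \<beta> * x k" using k by (simp add: sum.distrib sum_distrib_left)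
  finally show ?thesis .
qed

lemma Tm_apply: "k < P \<Longrightarrow> (\<Sum>l<P. Tm P r $$ (k,l) * x l) = 
   (sqrt (1 + (real P - 1) * r) - sqrt (1 - r)) / real P * (\<Sum>l<P. x l) + sqrt (1 - r) * x k"
proof -
  assume k: "k < P"
  have "(\<Sum>l<P. Tm P r $$ (k,l) * x l) = (\<Sum>l<P. ((sqrt (1 + (real P - 1) * r) - sqrt (1 - r)) / real P
      + (if k = l then sqrt (1 - r) else 0)) * x l)"
    using k by (intro sum.cong refl) (simp add: Tm_index)
  also have "\<dots> = (sqrt (1 + (real P - 1) * r) - sqrt (1 - r)) / real P * (\<Sum>l<P. x l) + sqrt (1 - r) * x k"
    by (rule lin_apply[OF k])
  finally show ?thesis .
qed

lemma sum_sq_ge: fixes f :: "nat \<Rightarrow> real" assumes "P > 0"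
  shows "(\<Sum>i<P. f i)^2 / real P \<le> (\<Sum>i<P. (f i)^2)"
proof -
  define s where "s = (\<Sum>i<P. f i)"
  have "0 \<le> (\<Sum>i<P. (f i - s / real P)^2)" by (intro sum_nonneg) auto
  also have "\<dots> = (\<Sum>i<P. (f i)^2) - 2 * (s / real P) * s + real P * (s / real P)^2"
  proof -
    have "(\<Sum>i<P. (f i - c)^2) = (\<Sum>i<P. (f i)^2) - (2 * c) * (\<Sum>i<P. f i) + real P * c^2" for c
    proof -
      have "(\<Sum>i<P. (f i - c)^2) = (\<Sum>i<P. (f i)^2 - (2 * c) * f i + c^2)"
        by (intro sum.cong refl) (simp add: power2_diff algebra_simps)
      also have "\<dots> = (\<Sum>i<P. (f i)^2) - (2 * c) * (\<Sum>i<P. f i) + real P * c^2"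
        by (simp add: sum.distrib sum_subtractf sum_distrib_left[symmetric])
      finally show ?thesis .
    qed
    then show ?thesis unfolding s_def by simp
  qed
  also have "\<dots> = (\<Sum>i<P. (f i)^2) - s^2 / real P" using assms by (simp add: power2_eq_square field_simps)
  finally show ?thesis unfolding s_def by simp
qed

lemma Tm_psd:
  assumes P: "P > 0" and l1: "1 - r \<ge> 0" and l2: "1 + (real P - 1) * r \<ge> 0"
  shows "psd_mat P (Tm P r)"
  unfolding psd_mat_def
proof (intro conjI ballI)
  show "Tm P r \<in> carrier_mat P P" by simp
  show "transpose_mat (Tm P r) = Tm P r" by (rule eq_matI) (auto simp: Tm_index)
  fix v :: "real vec" assume v: "v \<in> carrier_vec P"
  define a where "a = (sqrt (1 + (real P - 1) * r) - sqrt (1 - r)) / real P"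
  define b where "b = sqrt (1 - r)"
  define s where "s = (\<Sum>i<P. v $ i)"
  define q where "q = (\<Sum>i<P. (v $ i)^2)"
  have "v \<bullet> (Tm P r *\<^sub>v v) = (\<Sum>i<P. v $ i * (Tm P r *\<^sub>v v) $ i)"
    by (rule sp_sum) (use v in \<open>metis mult_mat_vec_carrier Tm_carrier\<close>)
  also have "\<dots> = (\<Sum>i<P. v $ i * (\<Sum>j<P. Tm P r $$ (i,j) * v $ j))"
    by (intro sum.cong refl) (subst mv_index[OF Tm_carrier v], auto)
  also have "\<dots> = (\<Sum>i<P. v $ i * (a * s + b * v $ i))"
    by (intro sum.cong refl) (simp add: Tm_apply a_def b_def s_def)
  also have "\<dots> = a * s^2 + b * q"
    by (simp add: s_def q_def algebra_simps sum.distrib sum_distrib_left power2_eq_square)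
  finally have e: "v \<bullet> (Tm P r *\<^sub>v v) = a * s^2 + b * q" .
  have sq: "s^2 / real P \<le> q" unfolding s_def q_def by (rule sum_sq_ge[OF P])
  have "a * s^2 + b * q = sqrt (1 + (real P - 1) * r) * (s^2 / real P) + b * (q - s^2 / real P)"
    unfolding a_def b_def using P by (simp add: field_simps)
  also have "\<dots> \<ge> 0" using sq l1 l2 unfolding b_def by (intro add_nonneg_nonneg mult_nonneg_nonneg) auto
  finally show "0 \<le> v \<bullet> (Tm P r *\<^sub>v v)" using e by simp
qed

lemma Tm_sq:
  assumes P: "P > 0" and l1: "1 - r \<ge> 0" and l2: "1 + (real P - 1) * r \<ge> 0"
  shows "Tm P r * Tm P r = Cout_mat P r"
proof (rule eq_matI)
  define a where "a = (sqrt (1 + (real P - 1) * r) - sqrt (1 - r)) / real P"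
  define b where "b = sqrt (1 - r)"
  have ab: "real P * a^2 + 2 * a * b = r"
  proof -
    have "real P * a^2 + 2 * a * b = (sqrt (1 + (real P - 1) * r) - b) * (sqrt (1 + (real P - 1) * r) + b) / real P"
      unfolding a_def b_def[symmetric] using P by (simp add: field_simps power2_eq_square)
    also have "\<dots> = ((1 + (real P - 1) * r) - (1 - r)) / real P"
      using l1 l2 unfolding b_def by (simp add: algebra_simps)
    also have "\<dots> = r" using P by (simp add: field_simps)
    finally show ?thesis .
  qed
  have bb: "b * b = 1 - r" using l1 unfolding b_def by simp
  fix i j assume i: "i < dim_row (Cout_mat P r)" and j: "j < dim_col (Cout_mat P r)"
  then have i: "i < P" and j: "j < P" by auto
  have cs: "(\<Sum>k<P. Tm P r $$ (k,j)) = real P * a + b"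
  proof -
    have "(\<Sum>k<P. Tm P r $$ (k,j)) = (\<Sum>k<P. a + (if k = j then b else 0))"
      using j by (intro sum.cong refl) (simp add: Tm_index a_def b_def)
    also have "\<dots> = real P * a + b" using j by (simp add: sum.distrib)
    finally show ?thesis .
  qed
  have "(Tm P r * Tm P r) $$ (i,j) = (\<Sum>k<P. Tm P r $$ (i,k) * Tm P r $$ (k,j))"
    by (rule mm_index[OF Tm_carrier Tm_carrier i j])
  also have "\<dots> = a * (\<Sum>k<P. Tm P r $$ (k,j)) + b * Tm P r $$ (i,j)"
    using i by (simp add: Tm_apply a_def b_def)
  also have "\<dots> = real P * a^2 + 2 * a * b + (if i = j then b * b else 0)"
  proof -
    have "Tm P r $$ (i,j) = a + (if i = j then b else 0)" using i j by (simp add: Tm_index a_def b_def)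
    then show ?thesis unfolding cs by (simp add: algebra_simps power2_eq_square)
  qed
  also have "\<dots> = Cout_mat P r $$ (i,j)" using i j ab bb by (simp add: Cout_index)
  finally show "(Tm P r * Tm P r) $$ (i,j) = Cout_mat P r $$ (i,j)" .
qed auto

lemma root_unique:
  assumes P: "P > 0" and l1: "1 - r \<ge> 0" and l2: "1 + (real P - 1) * r \<ge> 0"
    and S: "psd_mat P S" and SS: "S * S = Cout_mat P r"
  shows "S = Tm P r"
proof (rule eq_matI)
  have Sc: "S \<in> carrier_mat P P" using S unfolding psd_mat_def by auto
  fix i j assume "i < dim_row (Tm P r)" "j < dim_col (Tm P r)"
  then have i: "i < P" and j: "j < P" by (auto simp: Tm_def)
  define p :: "nat \<Rightarrow> real" where "p k = 1 / real P" for k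
  define q :: "nat \<Rightarrow> real" where "q k = (if k = j then 1 else 0) - 1 / real P" for k
  have sq: "(\<Sum>l<P. q l) = 0" using j P unfolding q_def by (simp add: sum_subtractf)
  have sp: "(\<Sum>l<P. p l) = 1" using P unfolding p_def by simp
  have ep: "(\<Sum>l<P. Cout_mat P r $$ (k,l) * p l) = (1 + (real P - 1) * r) * p k" if "k < P" for k
    unfolding Cout_apply[OF that] sp using P by (simp add: p_def field_simps)
  have eq: "(\<Sum>l<P. Cout_mat P r $$ (k,l) * q l) = (1 - r) * q k" if "k < P" for k
    using that sq by (simp add: Cout_apply)
  have rp: "(\<Sum>l<P. S $$ (i,l) * p l) = sqrt (1 + (real P - 1) * r) * p i"
    by (rule root_apply[OF S SS l2 ep i])
  have rq: "(\<Sum>l<P. S $$ (i,l) * q l) = sqrt (1 - r) * q i"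
    by (rule root_apply[OF S SS l1 eq i])
  have pq: "p l + q l = (if l = j then 1 else 0)" for l unfolding p_def q_def by simp
  have pq2: "S $$ (i,l) * (p l + q l) = (if l = j then S $$ (i,l) else 0)" for l unfolding pq by simp
  have "S $$ (i,j) = (\<Sum>l<P. S $$ (i,l) * (p l + q l))"
    using j unfolding pq2 by simp
  also have "\<dots> = sqrt (1 + (real P - 1) * r) * p i + sqrt (1 - r) * q i"
    using rp rq by (simp add: algebra_simps sum.distrib)
  also have "\<dots> = Tm P r $$ (i,j)" using i j unfolding p_def q_def
    by (simp add: Tm_index field_simps)
  finally show "S $$ (i,j) = Tm P r $$ (i,j)" .
qed (use S in \<open>auto simp: psd_mat_def Tm_def\<close>)

lemma psd_sqrt_Cout:
  assumes P: "P > 0" and l1: "1 - r \<ge> 0" and l2: "1 + (real P - 1) * r \<ge> 0"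
  shows "psd_sqrt P (Cout_mat P r) = Tm P r"
  unfolding psd_sqrt_def
proof (rule the_equality)
  show "psd_mat P (Tm P r) \<and> Tm P r * Tm P r = Cout_mat P r" using Tm_psd[OF assms] Tm_sq[OF assms] by simp
  fix S assume "psd_mat P S \<and> S * S = Cout_mat P r"
  then show "S = Tm P r" using root_unique[OF assms] by blast
qed

definition Qf :: "nat \<Rightarrow> real \<Rightarrow> real mat \<Rightarrow> real" where
  "Qf P r X = (\<Sum>j<P. (1 - r) * (\<Sum>i<P. (X $$ (i,j))^2) + r * (\<Sum>i<P. X $$ (i,j))^2)"

lemma frob_Tm:
  assumes P: "P > 0" and l1: "1 - r \<ge> 0" and l2: "1 + (real P - 1) * r \<ge> 0"
    and X: "X \<in> carrier_mat P P"
  shows "frob_sq (Tm P r * X) = Qf P r X"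
proof -
  define a where "a = (sqrt (1 + (real P - 1) * r) - sqrt (1 - r)) / real P"
  define b where "b = sqrt (1 - r)"
  have ab: "real P * a^2 + 2 * a * b = r"
  proof -
    have "real P * a^2 + 2 * a * b = (sqrt (1 + (real P - 1) * r) - b) * (sqrt (1 + (real P - 1) * r) + b) / real P"
      unfolding a_def b_def[symmetric] using P by (simp add: field_simps power2_eq_square)
    also have "\<dots> = ((1 + (real P - 1) * r) - (1 - r)) / real P"
      using l1 l2 unfolding b_def by (simp add: algebra_simps)
    also have "\<dots> = r" using P by (simp add: field_simps)
    finally show ?thesis .
  qed
  have bb: "b^2 = 1 - r" using l1 unfolding b_def by simp
  have ent: "(Tm P r * X) $$ (i,j) = a * (\<Sum>k<P. X $$ (k,j)) + b * X $$ (i,j)" if "i < P" "j < P" for i j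
  proof -
    have "(Tm P r * X) $$ (i,j) = (\<Sum>k<P. Tm P r $$ (i,k) * X $$ (k,j))" by (rule mm_index[OF Tm_carrier X that])
    also have "\<dots> = a * (\<Sum>k<P. X $$ (k, j)) + b * X $$ (i, j)" unfolding Tm_apply[OF that(1)] a_def b_def ..
    finally show ?thesis .
  qed
  have "frob_sq (Tm P r * X) = (\<Sum>i<P. \<Sum>j<P. (a * (\<Sum>k<P. X $$ (k,j)) + b * X $$ (i,j))^2)"
  proof -
    have d: "dim_row (Tm P r * X) = P" "dim_col (Tm P r * X) = P" using X by auto
    show ?thesis unfolding frob_sq_def d by (intro sum.cong refl) (metis ent lessThan_iff)
  qed
  also have "\<dots> = (\<Sum>j<P. \<Sum>i<P. (a * (\<Sum>k<P. X $$ (k,j)) + b * X $$ (i,j))^2)" by (rule sum.swap)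
  also have "\<dots> = (\<Sum>j<P. (1 - r) * (\<Sum>i<P. (X $$ (i,j))^2) + r * (\<Sum>i<P. X $$ (i,j))^2)"
  proof (intro sum.cong refl)
    fix j
    define s where "s = (\<Sum>k<P. X $$ (k,j))"
    have "(\<Sum>i<P. (a * s + b * X $$ (i,j))^2) = (\<Sum>i<P. a^2 * s^2 + 2 * a * b * s * X $$ (i,j) + b^2 * (X $$ (i,j))^2)"
      by (intro sum.cong refl) (simp add: power2_eq_square algebra_simps)
    also have "\<dots> = (real P * a^2 + 2 * a * b) * s^2 + b^2 * (\<Sum>i<P. (X $$ (i,j))^2)"
    proof -
      have "(\<Sum>i<P. a^2 * s^2 + 2 * a * b * s * X $$ (i,j) + b^2 * (X $$ (i,j))^2)
         = real P * (a^2 * s^2) + (2 * a * b * s) * (\<Sum>i<P. X $$ (i,j)) + b^2 * (\<Sum>i<P. (X $$ (i,j))^2)"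
        by (simp add: sum.distrib sum_distrib_left[symmetric])
      then show ?thesis unfolding s_def[symmetric] by (simp add: power2_eq_square algebra_simps)
    qed
    also have "\<dots> = (1 - r) * (\<Sum>i<P. (X $$ (i,j))^2) + r * s^2" using ab bb by simp
    finally show "(\<Sum>i<P. (a * (\<Sum>k<P. X $$ (k,j)) + b * X $$ (i,j))^2) = (1 - r) * (\<Sum>i<P. (X $$ (i,j))^2) + r * (\<Sum>i<P. X $$ (i,j))^2"
      unfolding s_def .
  qed
  finally show ?thesis unfolding Qf_def .
qed

lemma add_eq_minus:
  fixes M N C :: "real mat"
  assumes "M \<in> carrier_mat n k" "N \<in> carrier_mat n k" "M + N = C"
  shows "M = C - N"
proof (rule eq_matI)
  have Cc: "C \<in> carrier_mat n k" using assms by auto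
  fix i j assume ij: "i < dim_row (C - N)" "j < dim_col (C - N)"
  have i: "i < n" and j: "j < k" using ij assms by auto
  have e1: "(M + N) $$ (i,j) = C $$ (i,j)" using assms(3) by simp
  have e2: "(M + N) $$ (i,j) = M $$ (i,j) + N $$ (i,j)" using i j assms(1,2) by simp
  have e3: "(C - N) $$ (i,j) = C $$ (i,j) - N $$ (i,j)" using i j assms(2) Cc by simp
  show "M $$ (i,j) = (C - N) $$ (i,j)" using e1 e2 e3 by simp
qed (use assms in auto)

lemma pert_alg:
  fixes B0 B U0 EU C0 E :: "real mat"
  assumes c: "B0 \<in> carrier_mat n n" "B \<in> carrier_mat n n" "U0 \<in> carrier_mat n n"
    "EU \<in> carrier_mat n n" "C0 \<in> carrier_mat n n" "E \<in> carrier_mat n n"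
    and inv: "B * (1\<^sub>m n + (U0 + EU)) = 1\<^sub>m n" and inv0: "(1\<^sub>m n + U0) * B0 = 1\<^sub>m n"
  defines "K \<equiv> EU * (B0 * C0) - E"
  shows "1\<^sub>m n - B * (C0 + E) = (1\<^sub>m n - B0 * C0) + (B0 * K - B * (EU * (B0 * K)))"
proof -
  have Kc: "K \<in> carrier_mat n n" unfolding K_def using c by auto
  have "B * (1\<^sub>m n + U0) + B * EU = B * ((1\<^sub>m n + U0) + EU)"
    by (rule mult_add_distrib_mat[symmetric]) (use c in auto)
  also have "(1\<^sub>m n + U0) + EU = 1\<^sub>m n + (U0 + EU)" by (rule assoc_add_mat) (use c in auto)
  finally have "B * (1\<^sub>m n + U0) + B * EU = 1\<^sub>m n" using inv by simp
  then have h1: "B * (1\<^sub>m n + U0) = 1\<^sub>m n - B * EU"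
    by (rule add_eq_minus[rotated 2]) (use c in auto)
  have "B = B * ((1\<^sub>m n + U0) * B0)" using inv0 c by simp
  also have "\<dots> = (B * (1\<^sub>m n + U0)) * B0" by (rule assoc_mult_mat[symmetric]) (use c in auto)
  also have "\<dots> = (1\<^sub>m n - B * EU) * B0" unfolding h1 ..
  also have "\<dots> = 1\<^sub>m n * B0 - (B * EU) * B0" by (rule minus_mult_distrib_mat) (use c in auto)
  also have "\<dots> = B0 - B * (EU * B0)" using c by simp
  finally have hB: "B = B0 - B * (EU * B0)" .
  have hBC: "B * C0 = B0 * C0 - B * (EU * (B0 * C0))"
  proof -
    have "B * C0 = (B0 - B * (EU * B0)) * C0" using hB by simp
    also have "\<dots> = B0 * C0 - (B * (EU * B0)) * C0" by (rule minus_mult_distrib_mat) (use c in auto)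
    also have "(B * (EU * B0)) * C0 = B * ((EU * B0) * C0)" by (rule assoc_mult_mat) (use c in auto)
    also have "(EU * B0) * C0 = EU * (B0 * C0)" by (rule assoc_mult_mat) (use c in auto)
    finally show ?thesis .
  qed
  have hBK1: "B * K = B * (EU * (B0 * C0)) - B * E"
    unfolding K_def by (rule mult_minus_distrib_mat) (use c in auto)
  have hBK2: "B * K = B0 * K - B * (EU * (B0 * K))"
  proof -
    have "B * K = (B0 - B * (EU * B0)) * K" using hB by simp
    also have "\<dots> = B0 * K - (B * (EU * B0)) * K" by (rule minus_mult_distrib_mat) (use c Kc in auto)
    also have "(B * (EU * B0)) * K = B * ((EU * B0) * K)" by (rule assoc_mult_mat) (use c Kc in auto)
    also have "(EU * B0) * K = EU * (B0 * K)" by (rule assoc_mult_mat) (use c Kc in auto)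
    finally show ?thesis .
  qed
  have hBCE: "B * (C0 + E) = B * C0 + B * E" by (rule mult_add_distrib_mat) (use c in auto)
  show ?thesis unfolding hBK2[symmetric] hBK1 hBCE hBC
    by (rule eq_matI) (use c in auto)
qed

definition nrm :: "nat \<Rightarrow> real mat \<Rightarrow> real" where
  "nrm n A = (\<Sum>i<n. \<Sum>j<n. \<bar>A $$ (i,j)\<bar>)"

lemma nrm_nonneg: "0 \<le> nrm n A" unfolding nrm_def by (intro sum_nonneg) auto

lemma entry_le_nrm: "i < n \<Longrightarrow> j < n \<Longrightarrow> \<bar>A $$ (i,j)\<bar> \<le> nrm n A"
proof -
  assume i: "i < n" and j: "j < n"
  have "\<bar>A $$ (i,j)\<bar> \<le> (\<Sum>j<n. \<bar>A $$ (i,j)\<bar>)"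
    using j by (intro member_le_sum) auto
  also have "\<dots> \<le> nrm n A" unfolding nrm_def using i
    by (intro member_le_sum[where f = "\<lambda>i. \<Sum>j<n. \<bar>A $$ (i,j)\<bar>"]) (auto intro: sum_nonneg)
  finally show ?thesis .
qed

lemma row_le_nrm: "i < n \<Longrightarrow> (\<Sum>j<n. \<bar>A $$ (i,j)\<bar>) \<le> nrm n A"
  unfolding nrm_def by (intro member_le_sum[where f = "\<lambda>i. \<Sum>j<n. \<bar>A $$ (i,j)\<bar>"]) (auto intro: sum_nonneg)

lemma col_le_nrm: "j < n \<Longrightarrow> (\<Sum>i<n. \<bar>A $$ (i,j)\<bar>) \<le> nrm n A"
proof -
  assume j: "j < n"
  have "(\<Sum>i<n. \<bar>A $$ (i,j)\<bar>) \<le> (\<Sum>i<n. \<Sum>j<n. \<bar>A $$ (i,j)\<bar>)"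
    using j by (intro sum_mono member_le_sum) auto
  then show ?thesis unfolding nrm_def .
qed

lemma nrm_mult:
  assumes A: "A \<in> carrier_mat n n" and B: "B \<in> carrier_mat n n"
  shows "nrm n (A * B) \<le> nrm n A * nrm n B"
proof -
  have "nrm n (A * B) = (\<Sum>i<n. \<Sum>j<n. \<bar>\<Sum>k<n. A $$ (i,k) * B $$ (k,j)\<bar>)"
    unfolding nrm_def by (intro sum.cong refl) (simp add: mm_index[OF A B])
  also have "\<dots> \<le> (\<Sum>i<n. \<Sum>j<n. \<Sum>k<n. \<bar>A $$ (i,k)\<bar> * \<bar>B $$ (k,j)\<bar>)"
    by (intro sum_mono) (metis (no_types, lifting) abs_mult sum_abs order_trans sum_mono order_refl)
  also have "\<dots> = (\<Sum>i<n. \<Sum>k<n. \<bar>A $$ (i,k)\<bar> * (\<Sum>j<n. \<bar>B $$ (k,j)\<bar>))"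
    by (rule sum.cong[OF refl]) (subst sum.swap, simp add: sum_distrib_left)
  also have "\<dots> \<le> (\<Sum>i<n. \<Sum>k<n. \<bar>A $$ (i,k)\<bar> * nrm n B)"
    by (intro sum_mono mult_left_mono row_le_nrm) auto
  also have "\<dots> = nrm n A * nrm n B" unfolding nrm_def by (simp add: sum_distrib_right)
  finally show ?thesis .
qed

lemma nrm_add:
  assumes A: "A \<in> carrier_mat n n" and B: "B \<in> carrier_mat n n"
  shows "nrm n (A + B) \<le> nrm n A + nrm n B"
  unfolding nrm_def using A B
  by (simp add: sum.distrib[symmetric]) (intro sum_mono, auto intro: abs_triangle_ineq)

lemma nrm_minus:
  assumes A: "A \<in> carrier_mat n n" and B: "B \<in> carrier_mat n n"
  shows "nrm n (A - B) \<le> nrm n A + nrm n B"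
  unfolding nrm_def using A B
  by (simp add: sum.distrib[symmetric]) (intro sum_mono, auto intro: abs_triangle_ineq4)

definition Bf :: "nat \<Rightarrow> real \<Rightarrow> real mat \<Rightarrow> real mat \<Rightarrow> real" where
  "Bf P r Y Z = (\<Sum>j<P. (1 - r) * (\<Sum>i<P. Y $$ (i,j) * Z $$ (i,j)) + r * ((\<Sum>i<P. Y $$ (i,j)) * (\<Sum>i<P. Z $$ (i,j))))"

lemma Qf_Bf: "Qf P r X = Bf P r X X"
  unfolding Qf_def Bf_def by (simp add: power2_eq_square)

lemma Bf_sym: "Bf P r Y Z = Bf P r Z Y"
  unfolding Bf_def by (simp add: mult.commute)

lemma Bf_add2:
  assumes "Z1 \<in> carrier_mat P P" "Z2 \<in> carrier_mat P P"
  shows "Bf P r Y (Z1 + Z2) = Bf P r Y Z1 + Bf P r Y Z2"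
proof -
  have e: "(Z1 + Z2) $$ (i,j) = Z1 $$ (i,j) + Z2 $$ (i,j)" if "i < P" "j < P" for i j
    using assms that by simp
  have "Bf P r Y Z1 + Bf P r Y Z2 = (\<Sum>j<P. ((1 - r) * (\<Sum>i<P. Y $$ (i,j) * Z1 $$ (i,j)) + r * ((\<Sum>i<P. Y $$ (i,j)) * (\<Sum>i<P. Z1 $$ (i,j))))
     + ((1 - r) * (\<Sum>i<P. Y $$ (i,j) * Z2 $$ (i,j)) + r * ((\<Sum>i<P. Y $$ (i,j)) * (\<Sum>i<P. Z2 $$ (i,j)))))"
    unfolding Bf_def by (simp only: sum.distrib)
  also have "\<dots> = Bf P r Y (Z1 + Z2)" unfolding Bf_def
  proof (rule sum.cong[OF refl])
    fix j assume "j \<in> {..<P}"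
    then have j: "j < P" by simp
    have s1: "(\<Sum>i<P. Y $$ (i,j) * (Z1 + Z2) $$ (i,j)) = (\<Sum>i<P. Y $$ (i,j) * Z1 $$ (i,j)) + (\<Sum>i<P. Y $$ (i,j) * Z2 $$ (i,j))"
      using j by (simp add: e algebra_simps sum.distrib)
    have s2: "(\<Sum>i<P. (Z1 + Z2) $$ (i,j)) = (\<Sum>i<P. Z1 $$ (i,j)) + (\<Sum>i<P. Z2 $$ (i,j))"
      using j by (simp add: e sum.distrib)
    show "((1 - r) * (\<Sum>i<P. Y $$ (i,j) * Z1 $$ (i,j)) + r * ((\<Sum>i<P. Y $$ (i,j)) * (\<Sum>i<P. Z1 $$ (i,j))))
     + ((1 - r) * (\<Sum>i<P. Y $$ (i,j) * Z2 $$ (i,j)) + r * ((\<Sum>i<P. Y $$ (i,j)) * (\<Sum>i<P. Z2 $$ (i,j)))) =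
      (1 - r) * (\<Sum>i<P. Y $$ (i,j) * (Z1 + Z2) $$ (i,j)) + r * ((\<Sum>i<P. Y $$ (i,j)) * (\<Sum>i<P. (Z1 + Z2) $$ (i,j)))"
      unfolding s1 s2 by (simp add: algebra_simps)
  qed
  finally show ?thesis by simp
qed

lemma Bf_minus2:
  assumes "Z1 \<in> carrier_mat P P" "Z2 \<in> carrier_mat P P"
  shows "Bf P r Y (Z1 - Z2) = Bf P r Y Z1 - Bf P r Y Z2"
proof -
  have e: "(Z1 - Z2) $$ (i,j) = Z1 $$ (i,j) - Z2 $$ (i,j)" if "i < P" "j < P" for i j
    using assms that by simp
  have "Bf P r Y Z1 - Bf P r Y Z2 = (\<Sum>j<P. ((1 - r) * (\<Sum>i<P. Y $$ (i,j) * Z1 $$ (i,j)) + r * ((\<Sum>i<P. Y $$ (i,j)) * (\<Sum>i<P. Z1 $$ (i,j))))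
     - ((1 - r) * (\<Sum>i<P. Y $$ (i,j) * Z2 $$ (i,j)) + r * ((\<Sum>i<P. Y $$ (i,j)) * (\<Sum>i<P. Z2 $$ (i,j)))))"
    unfolding Bf_def by (simp only: sum_subtractf)
  also have "\<dots> = Bf P r Y (Z1 - Z2)" unfolding Bf_def
  proof (rule sum.cong[OF refl])
    fix j assume "j \<in> {..<P}"
    then have j: "j < P" by simp
    have s1: "(\<Sum>i<P. Y $$ (i,j) * (Z1 - Z2) $$ (i,j)) = (\<Sum>i<P. Y $$ (i,j) * Z1 $$ (i,j)) - (\<Sum>i<P. Y $$ (i,j) * Z2 $$ (i,j))"
      using j by (simp add: e algebra_simps sum_subtractf)
    have s2: "(\<Sum>i<P. (Z1 - Z2) $$ (i,j)) = (\<Sum>i<P. Z1 $$ (i,j)) - (\<Sum>i<P. Z2 $$ (i,j))"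
      using j by (simp add: e sum_subtractf)
    show "((1 - r) * (\<Sum>i<P. Y $$ (i,j) * Z1 $$ (i,j)) + r * ((\<Sum>i<P. Y $$ (i,j)) * (\<Sum>i<P. Z1 $$ (i,j))))
     - ((1 - r) * (\<Sum>i<P. Y $$ (i,j) * Z2 $$ (i,j)) + r * ((\<Sum>i<P. Y $$ (i,j)) * (\<Sum>i<P. Z2 $$ (i,j)))) =
      (1 - r) * (\<Sum>i<P. Y $$ (i,j) * (Z1 - Z2) $$ (i,j)) + r * ((\<Sum>i<P. Y $$ (i,j)) * (\<Sum>i<P. (Z1 - Z2) $$ (i,j)))"
      unfolding s1 s2 by (simp add: algebra_simps)
  qed
  finally show ?thesis by simp
qed

lemma Qf_add:
  assumes "Y \<in> carrier_mat P P" "Z \<in> carrier_mat P P"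
  shows "Qf P r (Y + Z) = Qf P r Y + 2 * Bf P r Y Z + Qf P r Z"
proof -
  have "Qf P r (Y + Z) = Bf P r (Y + Z) (Y + Z)" by (rule Qf_Bf)
  also have "\<dots> = Bf P r (Y + Z) Y + Bf P r (Y + Z) Z" by (rule Bf_add2[OF assms])
  also have "Bf P r (Y + Z) Y = Bf P r Y Y + Bf P r Z Y"
    by (subst Bf_sym, subst Bf_add2[OF assms], simp add: Bf_sym)
  also have "Bf P r (Y + Z) Z = Bf P r Y Z + Bf P r Z Z"
    by (subst Bf_sym, subst Bf_add2[OF assms], simp add: Bf_sym)
  finally show ?thesis by (simp add: Qf_Bf Bf_sym[of P r Z Y])
qed

lemma Bf_bound:
  "\<bar>Bf P r Y Z\<bar> \<le> (\<bar>1 - r\<bar> + \<bar>r\<bar>) * nrm P Y * nrm P Z"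
proof -
  have t1: "(\<Sum>j<P. \<Sum>i<P. \<bar>Y $$ (i,j)\<bar> * \<bar>Z $$ (i,j)\<bar>) \<le> nrm P Y * nrm P Z"
  proof -
    have "(\<Sum>j<P. \<Sum>i<P. \<bar>Y $$ (i,j)\<bar> * \<bar>Z $$ (i,j)\<bar>) \<le> (\<Sum>j<P. \<Sum>i<P. \<bar>Y $$ (i,j)\<bar> * nrm P Z)"
      by (intro sum_mono mult_left_mono entry_le_nrm) auto
    also have "\<dots> = nrm P Y * nrm P Z" unfolding nrm_def
      by (subst sum.swap) (simp add: sum_distrib_right)
    finally show ?thesis .
  qed
  have t2: "(\<Sum>j<P. (\<Sum>i<P. \<bar>Y $$ (i,j)\<bar>) * (\<Sum>i<P. \<bar>Z $$ (i,j)\<bar>)) \<le> nrm P Y * nrm P Z"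
  proof -
    have "(\<Sum>j<P. (\<Sum>i<P. \<bar>Y $$ (i,j)\<bar>) * (\<Sum>i<P. \<bar>Z $$ (i,j)\<bar>)) \<le> (\<Sum>j<P. (\<Sum>i<P. \<bar>Y $$ (i,j)\<bar>) * nrm P Z)"
      by (intro sum_mono mult_left_mono col_le_nrm) (auto intro: sum_nonneg)
    also have "\<dots> = nrm P Y * nrm P Z" unfolding nrm_def
      by (subst sum.swap) (simp add: sum_distrib_right)
    finally show ?thesis .
  qed
  have "\<bar>Bf P r Y Z\<bar> \<le> (\<Sum>j<P. \<bar>(1 - r) * (\<Sum>i<P. Y $$ (i,j) * Z $$ (i,j)) + r * ((\<Sum>i<P. Y $$ (i,j)) * (\<Sum>i<P. Z $$ (i,j)))\<bar>)"
    unfolding Bf_def by (rule sum_abs)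
  also have "\<dots> \<le> (\<Sum>j<P. \<bar>1 - r\<bar> * (\<Sum>i<P. \<bar>Y $$ (i,j)\<bar> * \<bar>Z $$ (i,j)\<bar>) + \<bar>r\<bar> * ((\<Sum>i<P. \<bar>Y $$ (i,j)\<bar>) * (\<Sum>i<P. \<bar>Z $$ (i,j)\<bar>)))"
  proof (rule sum_mono)
    fix j
    have a1: "\<bar>\<Sum>i<P. Y $$ (i,j) * Z $$ (i,j)\<bar> \<le> (\<Sum>i<P. \<bar>Y $$ (i,j)\<bar> * \<bar>Z $$ (i,j)\<bar>)"
      by (metis (no_types, lifting) abs_mult sum.cong sum_abs)
    have a2: "\<bar>(\<Sum>i<P. Y $$ (i,j)) * (\<Sum>i<P. Z $$ (i,j))\<bar> \<le> (\<Sum>i<P. \<bar>Y $$ (i,j)\<bar>) * (\<Sum>i<P. \<bar>Z $$ (i,j)\<bar>)"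
      unfolding abs_mult by (intro mult_mono sum_abs) (auto intro: sum_nonneg)
    show "\<bar>(1 - r) * (\<Sum>i<P. Y $$ (i,j) * Z $$ (i,j)) + r * ((\<Sum>i<P. Y $$ (i,j)) * (\<Sum>i<P. Z $$ (i,j)))\<bar>
      \<le> \<bar>1 - r\<bar> * (\<Sum>i<P. \<bar>Y $$ (i,j)\<bar> * \<bar>Z $$ (i,j)\<bar>) + \<bar>r\<bar> * ((\<Sum>i<P. \<bar>Y $$ (i,j)\<bar>) * (\<Sum>i<P. \<bar>Z $$ (i,j)\<bar>))"
    proof (rule order_trans[OF abs_triangle_ineq add_mono])
      show "\<bar>(1 - r) * (\<Sum>i<P. Y $$ (i,j) * Z $$ (i,j))\<bar> \<le> \<bar>1 - r\<bar> * (\<Sum>i<P. \<bar>Y $$ (i,j)\<bar> * \<bar>Z $$ (i,j)\<bar>)"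
        unfolding abs_mult by (rule mult_left_mono[OF a1]) simp
      show "\<bar>r * ((\<Sum>i<P. Y $$ (i,j)) * (\<Sum>i<P. Z $$ (i,j)))\<bar> \<le> \<bar>r\<bar> * ((\<Sum>i<P. \<bar>Y $$ (i,j)\<bar>) * (\<Sum>i<P. \<bar>Z $$ (i,j)\<bar>))"
        unfolding abs_mult[of r] by (rule mult_left_mono[OF a2]) simp
    qed
  qed
  also have "\<dots> = \<bar>1 - r\<bar> * (\<Sum>j<P. \<Sum>i<P. \<bar>Y $$ (i,j)\<bar> * \<bar>Z $$ (i,j)\<bar>) + \<bar>r\<bar> * (\<Sum>j<P. (\<Sum>i<P. \<bar>Y $$ (i,j)\<bar>) * (\<Sum>i<P. \<bar>Z $$ (i,j)\<bar>))"
    by (simp add: sum.distrib sum_distrib_left)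
  also have "\<dots> \<le> \<bar>1 - r\<bar> * (nrm P Y * nrm P Z) + \<bar>r\<bar> * (nrm P Y * nrm P Z)"
    by (intro add_mono mult_left_mono t1 t2) auto
  also have "\<dots> = (\<bar>1 - r\<bar> + \<bar>r\<bar>) * nrm P Y * nrm P Z" by (simp add: algebra_simps)
  finally show ?thesis .
qed

lemma swap4: "(\<Sum>j<n. \<Sum>l<n. \<Sum>p<n. \<Sum>q<(n::nat). F j l p q) = (\<Sum>p<n. \<Sum>q<n. \<Sum>j<n. \<Sum>l<n. (F j l p q::real))"
proof -
  have "(\<Sum>j<n. \<Sum>l<n. \<Sum>p<n. \<Sum>q<n. F j l p q) = (\<Sum>j<n. \<Sum>p<n. \<Sum>l<n. \<Sum>q<n. F j l p q)"
    by (rule sum.cong[OF refl], rule sum.swap)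
  also have "\<dots> = (\<Sum>p<n. \<Sum>j<n. \<Sum>l<n. \<Sum>q<n. F j l p q)" by (rule sum.swap)
  also have "\<dots> = (\<Sum>p<n. \<Sum>j<n. \<Sum>q<n. \<Sum>l<n. F j l p q)"
    by (rule sum.cong[OF refl], rule sum.cong[OF refl], rule sum.swap)
  also have "\<dots> = (\<Sum>p<n. \<Sum>q<n. \<Sum>j<n. \<Sum>l<n. F j l p q)"
    by (rule sum.cong[OF refl], rule sum.swap)
  finally show ?thesis .
qed

lemma swap3: "(\<Sum>j<n. \<Sum>l<n. \<Sum>p<(n::nat). F j l p) = (\<Sum>p<n. \<Sum>j<n. \<Sum>l<n. (F j l p::real))"
proof -
  have "(\<Sum>j<n. \<Sum>l<n. \<Sum>p<n. F j l p) = (\<Sum>j<n. \<Sum>p<n. \<Sum>l<n. F j l p)"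
    by (rule sum.cong[OF refl], rule sum.swap)
  also have "\<dots> = (\<Sum>p<n. \<Sum>j<n. \<Sum>l<n. F j l p)" by (rule sum.swap)
  finally show ?thesis .
qed

definition Hm :: "nat \<Rightarrow> real \<Rightarrow> real mat \<Rightarrow> nat \<Rightarrow> nat \<Rightarrow> real" where
  "Hm P r Y l j = (1 - r) * Y $$ (l,j) + r * (\<Sum>i<P. Y $$ (i,j))"

lemma Bf_H: "Bf P r Y Z = (\<Sum>j<P. \<Sum>l<P. Hm P r Y l j * Z $$ (l,j))"
  unfolding Bf_def
proof (rule sum.cong[OF refl])
  fix j
  have "(\<Sum>l<P. Hm P r Y l j * Z $$ (l,j)) = (\<Sum>l<P. (1 - r) * (Y $$ (l,j) * Z $$ (l,j)) + (r * (\<Sum>i<P. Y $$ (i,j))) * Z $$ (l,j))"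
    unfolding Hm_def by (intro sum.cong refl) (simp add: algebra_simps)
  also have "\<dots> = (1 - r) * (\<Sum>i<P. Y $$ (i,j) * Z $$ (i,j)) + r * ((\<Sum>i<P. Y $$ (i,j)) * (\<Sum>i<P. Z $$ (i,j)))"
    by (simp add: sum.distrib sum_distrib_left[symmetric] mult.assoc)
  finally show "(1 - r) * (\<Sum>i<P. Y $$ (i,j) * Z $$ (i,j)) + r * ((\<Sum>i<P. Y $$ (i,j)) * (\<Sum>i<P. Z $$ (i,j))) = (\<Sum>l<P. Hm P r Y l j * Z $$ (l,j))" by simp
qed

lemma lin1:
  assumes c: "B0 \<in> carrier_mat P P" "EU \<in> carrier_mat P P" "N \<in> carrier_mat P P"
  shows "Bf P r Y (B0 * (EU * N)) = (\<Sum>p<P. \<Sum>q<P. EU $$ (p,q) * (\<Sum>j<P. \<Sum>l<P. Hm P r Y l j * B0 $$ (l,p) * N $$ (q,j)))"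
proof -
  have ent: "(B0 * (EU * N)) $$ (l,j) = (\<Sum>p<P. B0 $$ (l,p) * (\<Sum>q<P. EU $$ (p,q) * N $$ (q,j)))" if "l < P" "j < P" for l j
  proof -
    have "(B0 * (EU * N)) $$ (l,j) = (\<Sum>p<P. B0 $$ (l,p) * (EU * N) $$ (p,j))"
      by (rule mm_index) (use c that in auto)
    also have "\<dots> = (\<Sum>p<P. B0 $$ (l,p) * (\<Sum>q<P. EU $$ (p,q) * N $$ (q,j)))"
      by (intro sum.cong refl) (simp add: mm_index[OF c(2,3) _ that(2)])
    finally show ?thesis .
  qed
  have "Bf P r Y (B0 * (EU * N)) = (\<Sum>j<P. \<Sum>l<P. \<Sum>p<P. \<Sum>q<P. EU $$ (p,q) * (Hm P r Y l j * B0 $$ (l,p) * N $$ (q,j)))"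
    unfolding Bf_H by (simp add: ent sum_distrib_left mult_ac)
  also have "\<dots> = (\<Sum>p<P. \<Sum>q<P. \<Sum>j<P. \<Sum>l<P. EU $$ (p,q) * (Hm P r Y l j * B0 $$ (l,p) * N $$ (q,j)))"
    by (rule swap4)
  also have "\<dots> = (\<Sum>p<P. \<Sum>q<P. EU $$ (p,q) * (\<Sum>j<P. \<Sum>l<P. Hm P r Y l j * B0 $$ (l,p) * N $$ (q,j)))"
    by (simp add: sum_distrib_left)
  finally show ?thesis .
qed

lemma lin2:
  assumes c: "B0 \<in> carrier_mat P P" "E \<in> carrier_mat P P"
  shows "Bf P r Y (B0 * E) = (\<Sum>p<P. \<Sum>q<P. E $$ (p,q) * (\<Sum>l<P. Hm P r Y l q * B0 $$ (l,p)))"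
proof -
  have ent: "(B0 * E) $$ (l,j) = (\<Sum>p<P. B0 $$ (l,p) * E $$ (p,j))" if "l < P" "j < P" for l j
    by (rule mm_index) (use c that in auto)
  have "Bf P r Y (B0 * E) = (\<Sum>j<P. \<Sum>l<P. \<Sum>p<P. E $$ (p,j) * (Hm P r Y l j * B0 $$ (l,p)))"
    unfolding Bf_H by (simp add: ent sum_distrib_left mult_ac)
  also have "\<dots> = (\<Sum>p<P. \<Sum>j<P. \<Sum>l<P. E $$ (p,j) * (Hm P r Y l j * B0 $$ (l,p)))"
    by (rule swap3)
  also have "\<dots> = (\<Sum>p<P. \<Sum>q<P. E $$ (p,q) * (\<Sum>l<P. Hm P r Y l q * B0 $$ (l,p)))"
    by (simp add: sum_distrib_left)
  finally show ?thesis .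
qed

lemma upper_sum:
  fixes P :: nat
  shows "(\<Sum>p<P. \<Sum>q<P. if p < q then f p q else 0) = (\<Sum>\<mu>=1..P. \<Sum>\<nu>=\<mu>+1..P. (f (\<mu>-1) (\<nu>-1) :: real))"
proof -
  have inner: "(\<Sum>q<P. if p < q then f p q else 0) = (\<Sum>\<nu>=Suc p+1..P. f p (\<nu>-1))" for p :: nat
  proof -
    have "(\<Sum>q<P. if p < q then f p q else 0) = (\<Sum>q\<in>{q\<in>{..<P}. p < q}. f p q)"
      by (subst sum.inter_filter) auto
    also have "{q\<in>{..<P}. p < q} = {Suc p..<P}" by auto
    also have "(\<Sum>q\<in>{Suc p..<P}. f p q) = (\<Sum>q\<in>{Suc p..<P}. f p (Suc q - 1))" by simp
    also have "\<dots> = (\<Sum>\<nu>\<in>{Suc (Suc p)..<Suc P}. f p (\<nu> - 1))"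
      by (rule sum.shift_bounds_Suc_ivl[symmetric])
    also have "{Suc (Suc p)..<Suc P} = {Suc p+1..P}" by auto
    finally show ?thesis .
  qed
  have "(\<Sum>p<P. \<Sum>q<P. if p < q then f p q else 0) = (\<Sum>p<P. \<Sum>\<nu>=Suc p+1..P. f p (\<nu>-1))"
    by (simp add: inner)
  also have "\<dots> = (\<Sum>p\<in>{0..<P}. \<Sum>\<nu>=Suc p+1..P. f (Suc p - 1) (\<nu>-1))" by (simp add: lessThan_atLeast0)
  also have "\<dots> = (\<Sum>\<mu>\<in>{Suc 0..<Suc P}. \<Sum>\<nu>=\<mu>+1..P. f (\<mu> - 1) (\<nu>-1))"
    by (rule sum.shift_bounds_Suc_ivl[symmetric])
  also have "{Suc 0..<Suc P} = {1..P}" by auto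
  finally show ?thesis .
qed

lemma pertB:
  fixes B0 B U0 EU :: "real mat"
  assumes c: "B0 \<in> carrier_mat n n" "B \<in> carrier_mat n n" "U0 \<in> carrier_mat n n"
    "EU \<in> carrier_mat n n"
    and inv: "B * (1\<^sub>m n + (U0 + EU)) = 1\<^sub>m n" and inv0: "(1\<^sub>m n + U0) * B0 = 1\<^sub>m n"
  shows "B = B0 - B * (EU * B0)"
proof -
  have "B * (1\<^sub>m n + U0) + B * EU = B * ((1\<^sub>m n + U0) + EU)"
    by (rule mult_add_distrib_mat[symmetric]) (use c in auto)
  also have "(1\<^sub>m n + U0) + EU = 1\<^sub>m n + (U0 + EU)" by (rule assoc_add_mat) (use c in auto)
  finally have "B * (1\<^sub>m n + U0) + B * EU = 1\<^sub>m n" using inv by simp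
  then have h1: "B * (1\<^sub>m n + U0) = 1\<^sub>m n - B * EU"
    by (rule add_eq_minus[rotated 2]) (use c in auto)
  have "B = B * ((1\<^sub>m n + U0) * B0)" using inv0 c by simp
  also have "\<dots> = (B * (1\<^sub>m n + U0)) * B0" by (rule assoc_mult_mat[symmetric]) (use c in auto)
  also have "\<dots> = (1\<^sub>m n - B * EU) * B0" unfolding h1 ..
  also have "\<dots> = 1\<^sub>m n * B0 - (B * EU) * B0" by (rule minus_mult_distrib_mat) (use c in auto)
  also have "\<dots> = B0 - B * (EU * B0)" using c by simp
  finally show ?thesis .
qed

lemma nrm_mult3:
  assumes "A \<in> carrier_mat n n" "B \<in> carrier_mat n n" "C \<in> carrier_mat n n"
  shows "nrm n (A * (B * C)) \<le> nrm n A * nrm n B * nrm n C"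
proof -
  have "nrm n (A * (B * C)) \<le> nrm n A * nrm n (B * C)" by (rule nrm_mult) (use assms in auto)
  also have "\<dots> \<le> nrm n A * (nrm n B * nrm n C)"
    by (intro mult_left_mono nrm_mult nrm_nonneg) (use assms in auto)
  finally show ?thesis by (simp add: mult.assoc)
qed

definition C0m :: "nat \<Rightarrow> real \<Rightarrow> real mat" where "C0m P m = Cin_mat P m (\<lambda>_ _. 0)"
definition B0m :: "nat \<Rightarrow> real \<Rightarrow> real mat" where "B0m P m = mat_inv P (1\<^sub>m P + strict_upper (C0m P m))"
definition X0m :: "nat \<Rightarrow> real \<Rightarrow> real mat" where "X0m P m = 1\<^sub>m P - B0m P m * C0m P m"
definition W1 :: "nat \<Rightarrow> real \<Rightarrow> real \<Rightarrow> nat \<Rightarrow> nat \<Rightarrow> real" where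
  "W1 P m r p q = (\<Sum>j<P. \<Sum>l<P. Hm P r (X0m P m) l j * B0m P m $$ (l,p) * (B0m P m * C0m P m) $$ (q,j))"
definition W2 :: "nat \<Rightarrow> real \<Rightarrow> real \<Rightarrow> nat \<Rightarrow> nat \<Rightarrow> real" where
  "W2 P m r p q = (\<Sum>l<P. Hm P r (X0m P m) l q * B0m P m $$ (l,p))"
definition Gf :: "nat \<Rightarrow> real \<Rightarrow> real \<Rightarrow> nat \<Rightarrow> nat \<Rightarrow> real" where
  "Gf P m r \<mu> \<nu> = W1 P m r (\<mu>-1) (\<nu>-1) - W2 P m r (\<mu>-1) (\<nu>-1) - W2 P m r (\<nu>-1) (\<mu>-1)"

lemma B0m_props:
  "B0m P m \<in> carrier_mat P P \<and> B0m P m * (1\<^sub>m P + strict_upper (C0m P m)) = 1\<^sub>m P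
     \<and> (1\<^sub>m P + strict_upper (C0m P m)) * B0m P m = 1\<^sub>m P"
proof -
  have C: "C0m P m \<in> carrier_mat P P" unfolding C0m_def by simp
  obtain B where B: "B \<in> carrier_mat P P" "B * (1\<^sub>m P + strict_upper (C0m P m)) = 1\<^sub>m P"
     "(1\<^sub>m P + strict_upper (C0m P m)) * B = 1\<^sub>m P" using inv_upper_exists[OF C] by blast
  have "B0m P m = B" unfolding B0m_def by (rule mat_inv_eq) (use B C in auto)
  then show ?thesis using B by simp
qed

lemma linear_part:
  fixes dM :: "nat \<Rightarrow> nat \<Rightarrow> real" and P :: nat and m r :: real
  defines "C \<equiv> Cin_mat P m dM" and "C0 \<equiv> C0m P m" and "B0 \<equiv> B0m P m"
  defines "E \<equiv> C - C0" and "EU \<equiv> strict_upper C - strict_upper C0" and "N \<equiv> B0 * C0"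
  shows "Bf P r (X0m P m) (B0 * (EU * N) - B0 * E) = (\<Sum>\<mu>=1..P. \<Sum>\<nu>=\<mu>+1..P. Gf P m r \<mu> \<nu> * dM \<mu> \<nu>)"
proof -
  have cC: "C \<in> carrier_mat P P" "C0 \<in> carrier_mat P P" unfolding C_def C0_def C0m_def by simp_all
  have cB0: "B0 \<in> carrier_mat P P" using B0m_props unfolding B0_def by blast
  have cE: "E \<in> carrier_mat P P" "EU \<in> carrier_mat P P" "N \<in> carrier_mat P P"
    unfolding E_def EU_def N_def using cC cB0 by auto
  have Ee: "E $$ (p,q) = (if p < q then dM (p+1) (q+1) else 0) + (if q < p then dM (q+1) (p+1) else 0)"
    if "p < P" "q < P" for p q
    using that cC unfolding E_def C_def C0_def C0m_def by auto
  have EUe: "EU $$ (p,q) = (if p < q then dM (p+1) (q+1) else 0)" if "p < P" "q < P" for p q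
    using that cC unfolding EU_def C_def C0_def C0m_def by auto
  define w1 where "w1 = W1 P m r"
  define w2 where "w2 = W2 P m r"
  have "Bf P r (X0m P m) (B0 * (EU * N) - B0 * E) = Bf P r (X0m P m) (B0 * (EU * N)) - Bf P r (X0m P m) (B0 * E)"
    by (rule Bf_minus2) (use cB0 cE in auto)
  also have "Bf P r (X0m P m) (B0 * (EU * N)) = (\<Sum>p<P. \<Sum>q<P. EU $$ (p,q) * w1 p q)"
    unfolding w1_def W1_def C0_def[symmetric] B0_def[symmetric] N_def[symmetric] by (rule lin1[OF cB0 cE(2) cE(3)])
  also have "Bf P r (X0m P m) (B0 * E) = (\<Sum>p<P. \<Sum>q<P. E $$ (p,q) * w2 p q)"
    unfolding w2_def W2_def B0_def[symmetric] by (rule lin2[OF cB0 cE(1)])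
  also have "(\<Sum>p<P. \<Sum>q<P. E $$ (p,q) * w2 p q) = (\<Sum>p<P. \<Sum>q<P. (if p < q then dM (p+1) (q+1) * w2 p q else 0))
       + (\<Sum>p<P. \<Sum>q<P. (if q < p then dM (q+1) (p+1) * w2 p q else 0))"
  proof -
    have t: "E $$ (p,q) * w2 p q = (if p < q then dM (p+1) (q+1) * w2 p q else 0) + (if q < p then dM (q+1) (p+1) * w2 p q else 0)"
      if "p < P" "q < P" for p q using that by (auto simp: Ee)
    show ?thesis by (simp add: t sum.distrib)
  qed
  also have "(\<Sum>p<P. \<Sum>q<P. (if q < p then dM (q+1) (p+1) * w2 p q else 0)) = (\<Sum>q<P. \<Sum>p<P. (if q < p then dM (q+1) (p+1) * w2 p q else 0))"
    by (rule sum.swap)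
  also have "(\<Sum>p<P. \<Sum>q<P. EU $$ (p,q) * w1 p q) = (\<Sum>p<P. \<Sum>q<P. (if p < q then dM (p+1) (q+1) * w1 p q else 0))"
  proof -
    have t: "EU $$ (p,q) * w1 p q = (if p < q then dM (p+1) (q+1) * w1 p q else 0)"
      if "p < P" "q < P" for p q using that by (auto simp: EUe)
    show ?thesis by (simp add: t)
  qed
  finally have "Bf P r (X0m P m) (B0 * (EU * N) - B0 * E) = (\<Sum>p<P. \<Sum>q<P. (if p < q then dM (p+1) (q+1) * (w1 p q - w2 p q - w2 q p) else 0))"
    by (simp add: sum_subtractf[symmetric] sum.distrib[symmetric] algebra_simps if_distrib cong: if_cong)
  also have "\<dots> = (\<Sum>\<mu>=1..P. \<Sum>\<nu>=\<mu>+1..P. dM (\<mu>-1+1) (\<nu>-1+1) * (w1 (\<mu>-1) (\<nu>-1) - w2 (\<mu>-1) (\<nu>-1) - w2 (\<nu>-1) (\<mu>-1)))"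
    by (rule upper_sum)
  also have "\<dots> = (\<Sum>\<mu>=1..P. \<Sum>\<nu>=\<mu>+1..P. Gf P m r \<mu> \<nu> * dM \<mu> \<nu>)"
    unfolding Gf_def w1_def w2_def by (intro sum.cong refl) (auto simp: mult.commute)
  finally show ?thesis .
qed

lemma nrm_le:
  assumes "\<And>i j. i < P \<Longrightarrow> j < P \<Longrightarrow> \<bar>A $$ (i,j)\<bar> \<le> c"
  shows "nrm P A \<le> real P ^ 2 * c"
proof -
  have "nrm P A \<le> (\<Sum>i<P. \<Sum>j<P. c)" unfolding nrm_def by (intro sum_mono) (use assms in auto)
  then show ?thesis by (simp add: power2_eq_square)
qed

lemma main_bound:
  fixes P :: nat and m r :: real
  assumes P: "P > 0" and l1: "1 - r \<ge> 0" and l2: "1 + (real P - 1) * r \<ge> 0"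
  shows "\<exists>K \<delta>0. \<delta>0 > 0 \<and>
        (\<forall>\<delta>m dM. 0 < \<delta>m \<and> \<delta>m < \<delta>0 \<and>
           (\<forall>\<mu> \<nu>. 1 \<le> \<mu> \<and> \<mu> < \<nu> \<and> \<nu> \<le> P \<longrightarrow> \<bar>dM \<mu> \<nu>\<bar> < \<delta>m) \<and>
           correlation_mat P (Cin_mat P m dM) \<longrightarrow>
           \<bar>eps_f P (Cin_mat P m dM) (Cout_mat P r)
             - eps_f P (Cin_mat P m (\<lambda>_ _. 0)) (Cout_mat P r)
             - 2 * (\<Sum>\<mu>=1..P. \<Sum>\<nu>=\<mu>+1..P. Gf P m r \<mu> \<nu> * dM \<mu> \<nu>)\<bar> \<le> K * \<delta>m^2)"
proof -
  define C0 where "C0 = C0m P m"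
  define B0 where "B0 = B0m P m"
  define X0 where "X0 = X0m P m"
  define b0 where "b0 = nrm P B0"
  define c0 where "c0 = nrm P C0"
  define x0 where "x0 = nrm P X0"
  define \<kappa> where "\<kappa> = \<bar>1 - r\<bar> + \<bar>r\<bar>"
  define \<delta>0 where "\<delta>0 = 1 / (2 * real P ^ 2 * b0 + 1)"
  define K where "K = real P ^ 4 * \<kappa> * 4 * b0^2 * (b0 * c0 + 1) * (x0 + b0 * c0 + 1)"
  have b0: "b0 \<ge> 0" "c0 \<ge> 0" "x0 \<ge> 0" "\<kappa> \<ge> 0" unfolding b0_def c0_def x0_def \<kappa>_def by (auto intro: nrm_nonneg)
  have h0: "0 \<le> 2 * real P ^ 2 * b0" using b0(1) by simp
  have h1: "0 < 2 * real P ^ 2 * b0 + 1" using h0 by linarith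
  have d0: "\<delta>0 > 0" unfolding \<delta>0_def using h1 by simp
  have cC0: "C0 \<in> carrier_mat P P" unfolding C0_def C0m_def by simp
  have B0p: "B0 \<in> carrier_mat P P" "B0 * (1\<^sub>m P + strict_upper C0) = 1\<^sub>m P" "(1\<^sub>m P + strict_upper C0) * B0 = 1\<^sub>m P"
    using B0m_props unfolding B0_def C0_def by blast+
  have cX0: "X0 \<in> carrier_mat P P" unfolding X0_def X0m_def using B0p cC0 B0_def C0_def by auto
  have eps0: "eps_f P (Cin_mat P m (\<lambda>_ _. 0)) (Cout_mat P r) = Qf P r X0"
  proof -
    have "eps_f P (Cin_mat P m (\<lambda>_ _. 0)) (Cout_mat P r) = frob_sq (Tm P r * X0)"
      unfolding eps_f_def psd_sqrt_Cout[OF P l1 l2] X0_def X0m_def B0m_def C0m_def ..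
    also have "\<dots> = Qf P r X0" by (rule frob_Tm[OF P l1 l2 cX0])
    finally show ?thesis .
  qed
  show ?thesis
  proof (rule exI[of _ K], rule exI[of _ \<delta>0], intro conjI allI impI)
    show "\<delta>0 > 0" by (rule d0)
    fix \<delta> :: real and dM :: "nat \<Rightarrow> nat \<Rightarrow> real"
    assume H: "0 < \<delta> \<and> \<delta> < \<delta>0 \<and> (\<forall>\<mu> \<nu>. 1 \<le> \<mu> \<and> \<mu> < \<nu> \<and> \<nu> \<le> P \<longrightarrow> \<bar>dM \<mu> \<nu>\<bar> < \<delta>) \<and>
           correlation_mat P (Cin_mat P m dM)"
    then have dpos: "0 < \<delta>" and dlt: "\<delta> < \<delta>0" and dMb: "\<And>\<mu> \<nu>. 1 \<le> \<mu> \<Longrightarrow> \<mu> < \<nu> \<Longrightarrow> \<nu> \<le> P \<Longrightarrow> \<bar>dM \<mu> \<nu>\<bar> < \<delta>"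
      by auto
    define C where "C = Cin_mat P m dM"
    define E where "E = C - C0"
    define U0 where "U0 = strict_upper C0"
    define EU where "EU = strict_upper C - U0"
    define N where "N = B0 * C0"
    define Kp where "Kp = EU * N - E"
    define e where "e = real P ^ 2 * \<delta>"
    have cC: "C \<in> carrier_mat P P" unfolding C_def by simp
    have cE: "E \<in> carrier_mat P P" "EU \<in> carrier_mat P P" "U0 \<in> carrier_mat P P" "N \<in> carrier_mat P P"
      unfolding E_def EU_def U0_def N_def using cC cC0 B0p by auto
    have cK: "Kp \<in> carrier_mat P P" unfolding Kp_def using cE by auto
    obtain B where Bp: "B \<in> carrier_mat P P" "B * (1\<^sub>m P + strict_upper C) = 1\<^sub>m P" "(1\<^sub>m P + strict_upper C) * B = 1\<^sub>m P"
      using inv_upper_exists[OF cC] by blast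
    have Binv: "mat_inv P (1\<^sub>m P + strict_upper C) = B" by (rule mat_inv_eq) (use Bp cC in auto)
    have UE: "U0 + EU = strict_upper C" unfolding EU_def U0_def by (rule eq_matI) (use cC cC0 in auto)
    have CE: "C0 + E = C" unfolding E_def by (rule eq_matI) (use cC cC0 in auto)
    have inv: "B * (1\<^sub>m P + (U0 + EU)) = 1\<^sub>m P" unfolding UE by (rule Bp(2))
    have inv0: "(1\<^sub>m P + U0) * B0 = 1\<^sub>m P" unfolding U0_def by (rule B0p(3))
    have alg: "1\<^sub>m P - B * (C0 + E) = (1\<^sub>m P - B0 * C0) + (B0 * Kp - B * (EU * (B0 * Kp)))"
      unfolding Kp_def N_def by (rule pert_alg[OF B0p(1) Bp(1) cE(3) cE(2) cC0 cE(1) inv inv0])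
    define L where "L = B0 * Kp"
    define R0 where "R0 = B * (EU * (B0 * Kp))"
    define D where "D = L - R0"
    have cL: "L \<in> carrier_mat P P" "R0 \<in> carrier_mat P P" "D \<in> carrier_mat P P"
      unfolding L_def R0_def D_def using B0p Bp cE cK by auto
    have X: "1\<^sub>m P - B * C = X0 + D"
    proof -
      have "1\<^sub>m P - B * C = 1\<^sub>m P - B * (C0 + E)" using CE by simp
      also have "\<dots> = (1\<^sub>m P - B0 * C0) + (B0 * Kp - B * (EU * (B0 * Kp)))" by (rule alg)
      also have "\<dots> = X0 + D" unfolding X0_def X0m_def B0_def[symmetric] C0_def[symmetric] D_def L_def R0_def ..
      finally show ?thesis .
    qed
    have eps1: "eps_f P (Cin_mat P m dM) (Cout_mat P r) = Qf P r (X0 + D)"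
    proof -
      have "eps_f P (Cin_mat P m dM) (Cout_mat P r) = frob_sq (Tm P r * (X0 + D))"
        unfolding eps_f_def psd_sqrt_Cout[OF P l1 l2] C_def[symmetric] Binv X ..
      also have "\<dots> = Qf P r (X0 + D)" by (rule frob_Tm[OF P l1 l2]) (use cX0 cL in auto)
      finally show ?thesis .
    qed
    have Lsplit: "L = B0 * (EU * N) - B0 * E" unfolding L_def Kp_def
      by (rule mult_minus_distrib_mat) (use B0p cE in auto)
    have lin: "Bf P r X0 L = (\<Sum>\<mu>=1..P. \<Sum>\<nu>=\<mu>+1..P. Gf P m r \<mu> \<nu> * dM \<mu> \<nu>)"
      unfolding Lsplit X0_def B0_def N_def E_def EU_def U0_def C_def C0_def by (rule linear_part)
    have diff: "eps_f P (Cin_mat P m dM) (Cout_mat P r) - eps_f P (Cin_mat P m (\<lambda>_ _. 0)) (Cout_mat P r)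
        - 2 * (\<Sum>\<mu>=1..P. \<Sum>\<nu>=\<mu>+1..P. Gf P m r \<mu> \<nu> * dM \<mu> \<nu>) = Qf P r D - 2 * Bf P r X0 R0"
    proof -
      have "Qf P r (X0 + D) = Qf P r X0 + 2 * Bf P r X0 D + Qf P r D" by (rule Qf_add) (use cX0 cL in auto)
      moreover have "Bf P r X0 D = Bf P r X0 L - Bf P r X0 R0" unfolding D_def by (rule Bf_minus2) (use cL in auto)
      ultimately show ?thesis unfolding eps1 eps0 lin[symmetric] by simp
    qed
    have Eb: "\<bar>E $$ (i,j)\<bar> \<le> \<delta>" if "i < P" "j < P" for i j
    proof -
      have "E $$ (i,j) = (if i = j then 0 else if i < j then dM (i+1) (j+1) else dM (j+1) (i+1))"
        unfolding E_def C_def C0_def C0m_def using that by auto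
      moreover have "\<bar>dM (i+1) (j+1)\<bar> < \<delta>" if "i < j" using dMb[of "i+1" "j+1"] that \<open>j < P\<close> by auto
      moreover have "\<bar>dM (j+1) (i+1)\<bar> < \<delta>" if "j < i" using dMb[of "j+1" "i+1"] that \<open>i < P\<close> by auto
      ultimately show ?thesis using dpos by (auto split: if_splits)
    qed
    have EUb: "\<bar>EU $$ (i,j)\<bar> \<le> \<delta>" if "i < P" "j < P" for i j
    proof -
      have "EU $$ (i,j) = (if i < j then dM (i+1) (j+1) else 0)"
        unfolding EU_def U0_def C_def C0_def C0m_def using that by auto
      moreover have "\<bar>dM (i+1) (j+1)\<bar> < \<delta>" if "i < j" using dMb[of "i+1" "j+1"] that \<open>j < P\<close> by auto
      ultimately show ?thesis using dpos by (auto split: if_splits)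
    qed
    have nE: "nrm P E \<le> e" unfolding e_def by (rule nrm_le[OF Eb])
    have nEU: "nrm P EU \<le> e" unfolding e_def by (rule nrm_le[OF EUb])
    have e0: "e \<ge> 0" unfolding e_def using dpos by simp
    have eb0: "e * b0 \<le> 1/2"
    proof -
      have "e * b0 \<le> real P ^ 2 * \<delta>0 * b0" unfolding e_def using dlt b0 by (intro mult_right_mono mult_left_mono) auto
      also have "\<dots> = real P ^ 2 * b0 / (2 * real P ^ 2 * b0 + 1)" unfolding \<delta>0_def by simp
      also have "\<dots> \<le> 1/2" using h1 h0 by (simp add: field_simps)
      finally show ?thesis .
    qed
    have nB: "nrm P B \<le> 2 * b0"
    proof -
      have hB: "B = B0 - B * (EU * B0)" by (rule pertB[OF B0p(1) Bp(1) cE(3) cE(2) inv inv0])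
      have "nrm P B \<le> nrm P B0 + nrm P (B * (EU * B0))" by (subst hB, rule nrm_minus) (use B0p Bp cE in auto)
      also have "nrm P (B * (EU * B0)) \<le> nrm P B * nrm P EU * nrm P B0" by (rule nrm_mult3) (use B0p Bp cE in auto)
      also have "nrm P B * nrm P EU * nrm P B0 \<le> nrm P B * e * b0"
        unfolding b0_def by (intro mult_right_mono mult_left_mono nEU nrm_nonneg)
      also have "nrm P B * e * b0 \<le> nrm P B * (1/2)" unfolding mult.assoc using eb0 nrm_nonneg[of P B]
        by (rule mult_left_mono)
      finally show ?thesis unfolding b0_def by simp
    qed
    define kb where "kb = e * (b0 * c0 + 1)"
    have kb0: "kb \<ge> 0" unfolding kb_def using e0 b0 by simp
    have nK: "nrm P Kp \<le> kb"
    proof -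
      have a: "nrm P Kp \<le> nrm P (EU * N) + nrm P E" unfolding Kp_def by (rule nrm_minus) (use cE in auto)
      have b: "nrm P (EU * N) \<le> nrm P EU * nrm P N" by (rule nrm_mult) (use cE in auto)
      have c: "nrm P N \<le> b0 * c0" unfolding N_def b0_def c0_def by (rule nrm_mult) (use B0p cC0 in auto)
      have d: "nrm P EU * nrm P N \<le> e * (b0 * c0)" by (rule mult_mono[OF nEU c]) (auto simp: nrm_nonneg e0)
      have "kb = e * (b0 * c0) + e" unfolding kb_def by (simp add: algebra_simps)
      then show ?thesis using a b d nE by linarith
    qed
    have nL: "nrm P L \<le> b0 * kb"
    proof -
      have "nrm P L \<le> b0 * nrm P Kp" unfolding L_def b0_def by (rule nrm_mult) (use B0p cK in auto)
      also have "\<dots> \<le> b0 * kb" using nK b0 by (intro mult_left_mono) auto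
      finally show ?thesis .
    qed
    have nR: "nrm P R0 \<le> 2 * b0 * e * (b0 * kb)"
    proof -
      have "nrm P R0 \<le> nrm P B * nrm P EU * nrm P (B0 * Kp)" unfolding R0_def by (rule nrm_mult3) (use B0p Bp cE cK in auto)
      also have "\<dots> \<le> (2 * b0) * e * (b0 * kb)"
        using nB nEU nL[unfolded L_def] by (intro mult_mono) (auto simp: nrm_nonneg e0 b0)
      finally show ?thesis .
    qed
    have nD: "nrm P D \<le> 2 * b0 * kb"
    proof -
      have "nrm P D \<le> nrm P L + nrm P R0" unfolding D_def by (rule nrm_minus) (use cL in auto)
      also have "\<dots> \<le> b0 * kb + 2 * b0 * e * (b0 * kb)" using nL nR by simp
      also have "\<dots> = b0 * kb * (1 + 2 * (e * b0))" by (simp add: algebra_simps)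
      also have "\<dots> \<le> b0 * kb * 2" using eb0 b0 kb0 by (intro mult_left_mono) auto
      finally show ?thesis by simp
    qed
    have "\<bar>Qf P r D - 2 * Bf P r X0 R0\<bar> \<le> \<bar>Qf P r D\<bar> + 2 * \<bar>Bf P r X0 R0\<bar>" by simp
    also have "\<bar>Qf P r D\<bar> \<le> \<kappa> * nrm P D * nrm P D" unfolding Qf_Bf \<kappa>_def by (rule Bf_bound)
    also have "\<bar>Bf P r X0 R0\<bar> \<le> \<kappa> * x0 * nrm P R0" unfolding \<kappa>_def x0_def by (rule Bf_bound)
    also have "\<kappa> * nrm P D * nrm P D \<le> \<kappa> * (2 * b0 * kb) * (2 * b0 * kb)"
      using nD b0 kb0 by (intro mult_mono mult_left_mono) (auto simp: nrm_nonneg)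
    also have "\<kappa> * x0 * nrm P R0 \<le> \<kappa> * x0 * (2 * b0 * e * (b0 * kb))"
      using nR b0 by (intro mult_left_mono) auto
    also have "\<kappa> * (2 * b0 * kb) * (2 * b0 * kb) + 2 * (\<kappa> * x0 * (2 * b0 * e * (b0 * kb))) = K * \<delta>^2"
      unfolding K_def kb_def e_def by (simp add: power2_eq_square power4_eq_xxxx algebra_simps)
    finally show "\<bar>eps_f P (Cin_mat P m dM) (Cout_mat P r) - eps_f P (Cin_mat P m (\<lambda>_ _. 0)) (Cout_mat P r)
        - 2 * (\<Sum>\<mu>=1..P. \<Sum>\<nu>=\<mu>+1..P. Gf P m r \<mu> \<nu> * dM \<mu> \<nu>)\<bar> \<le> K * \<delta>^2"
      unfolding diff by simp
  qed
qed

definition sN :: "nat \<Rightarrow> real \<Rightarrow> nat \<Rightarrow> real" where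
  "sN P a k = -(a^(k+2)) - (1+a) * a^(P-k) + (1+a)*(1-a)*real P*a^(2*P-k-1) + (2+a) * a^(2*P-k)"
definition FN :: "nat \<Rightarrow> real \<Rightarrow> nat \<Rightarrow> real" where
  "FN P a k = -(a^(k+2) - a^(P+2)) - (1+a)*(a - a^(P-k+1)) + (1+a)*(1-a)*real P*(a^P - a^(2*P-k))
     + (2+a)*(a^(P+1) - a^(2*P-k+1))"
definition vfun :: "nat \<Rightarrow> real \<Rightarrow> nat \<Rightarrow> real" where
  "vfun P a k = (1-a)*real P*a^P - a + 2*a^(P+1) - a^(k+2)"

lemma exps: assumes "P = k + 1 + d"
  shows "P - k = d + 1" "2*P-k-1 = k+1+(d+d)" "2*P-k = k+2+(d+d)" "P - k + 1 = d + 2" "2*P-k+1 = k+3+(d+d)"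
    "P - Suc k = d" "2*P - Suc k = k+1+(d+d)" "P - Suc k + 1 = d + 1" "2*P - Suc k + 1 = k+2+(d+d)"
    "P + 2 = k + 3 + d" "P + 1 = k + 2 + d" "Suc k + 2 = k + 3" "k + 2 + (d + d) - 1 = k + 1 + (d + d)"
  using assms by auto

lemma FN_step: assumes "k < P"
  shows "FN P a k = (1-a) * sN P a k + FN P a (Suc k)"
proof -
  obtain d where P: "P = k + 1 + d" using assms(1) by (metis add.commute add_Suc less_iff_Suc_add plus_1_eq_Suc)
  define x where "x = a^k"
  define y where "y = a^d"
  have aP: "a^P = x * a * y" unfolding x_def y_def P by (simp add: power_add)
  show ?thesis
    apply (unfold FN_def sN_def exps[OF P] aP)
    apply (simp only: power_add power_one_right power_Suc)
    apply (unfold x_def[symmetric] y_def[symmetric])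
    apply (simp add: algebra_simps power2_eq_square power3_eq_cube)
    done
qed

lemma sN_eq: assumes "k < P"
  shows "sN P a k + FN P a (Suc k) = (1 + a) * vfun P a k"
proof -
  obtain d where P: "P = k + 1 + d" using assms(1) by (metis add.commute add_Suc less_iff_Suc_add plus_1_eq_Suc)
  define x where "x = a^k"
  define y where "y = a^d"
  have aP: "a^P = x * a * y" unfolding x_def y_def P by (simp add: power_add)
  show ?thesis
    apply (unfold FN_def sN_def vfun_def exps[OF P] aP)
    apply (simp only: power_add power_one_right power_Suc)
    apply (unfold x_def[symmetric] y_def[symmetric])
    apply (simp add: algebra_simps power2_eq_square power3_eq_cube)
    done
qed

lemma FN_end: "FN P a P = 0"
  unfolding FN_def by (simp add: mult_2)

lemma tail_sum: assumes "k \<le> P"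
  shows "(1 - a) * (\<Sum>l\<in>{k..<P}. sN P a l) = FN P a k"
  using assms(1)
proof (induction "P - k" arbitrary: k)
  case 0
  then have "k = P" by simp
  then show ?case by (simp add: FN_end)
next
  case (Suc n)
  then have k: "k < P" and n: "n = P - Suc k" by auto
  have "(\<Sum>l\<in>{k..<P}. sN P a l) = sN P a k + (\<Sum>l\<in>{Suc k..<P}. sN P a l)"
    using k by (simp add: sum.atLeast_Suc_lessThan)
  then have "(1 - a) * (\<Sum>l\<in>{k..<P}. sN P a l) = (1 - a) * sN P a k + (1 - a) * (\<Sum>l\<in>{Suc k..<P}. sN P a l)"
    by (simp add: algebra_simps)
  also have "(1 - a) * (\<Sum>l\<in>{Suc k..<P}. sN P a l) = FN P a (Suc k)"
    using Suc.hyps(1)[OF n] k by simp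
  finally show ?case using FN_step[OF k] by simp
qed

lemma geom: "(1 - a) * (\<Sum>k<l. a^k) = 1 - (a::real)^l"
proof (induction l)
  case 0 show ?case by simp
next
  case (Suc l)
  have "(1 - a) * (\<Sum>k<Suc l. a^k) = (1 - a) * (\<Sum>k<l. a^k) + (1 - a) * a^l" by (simp add: algebra_simps)
  also have "\<dots> = 1 - a ^ Suc l" using Suc.IH by (simp add: algebra_simps)
  finally show ?case .
qed

lemma C0_index: "i < P \<Longrightarrow> j < P \<Longrightarrow> C0m P m $$ (i,j) = m + (if i = j then 1 - m else 0)"
  unfolding C0m_def by simp

lemma C0_carrier: "C0m P m \<in> carrier_mat P P" unfolding C0m_def by simp

lemma IU_index: "i < P \<Longrightarrow> j < P \<Longrightarrow> (1\<^sub>m P + strict_upper (C0m P m)) $$ (i,j) =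
   (if i = j then 1 else 0) + (if i < j then m else 0)"
  using C0_carrier[of P m] by (simp add: C0_index)

lemma IU_carrier: "1\<^sub>m P + strict_upper (C0m P m) \<in> carrier_mat P P"
  using C0_carrier[of P m] by simp

lemma sum_lt: "l \<le> (P::nat) \<Longrightarrow> (\<Sum>k<P. if k < l then f k else 0) = (\<Sum>k<l. (f k :: real))"
proof -
  assume l: "l \<le> P"
  have "(\<Sum>k<P. if k < l then f k else 0) = (\<Sum>k\<in>{k\<in>{..<P}. k < l}. f k)"
    by (subst sum.inter_filter) auto
  also have "{k\<in>{..<P}. k < l} = {..<l}" using l by auto
  finally show ?thesis .
qed

lemma sum_gt: "k < (P::nat) \<Longrightarrow> (\<Sum>l<P. if k < l then f l else 0) = (\<Sum>l\<in>{Suc k..<P}. (f l :: real))"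
proof -
  assume k: "k < P"
  have "(\<Sum>l<P. if k < l then f l else 0) = (\<Sum>l\<in>{l\<in>{..<P}. k < l}. f l)"
    by (subst sum.inter_filter) auto
  also have "{l\<in>{..<P}. k < l} = {Suc k..<P}" by auto
  finally show ?thesis .
qed

context
  fixes P :: nat and m a :: real
  assumes a: "a = 1 - m"
begin

lemma row1: assumes l: "l < P"
  shows "(\<Sum>k<P. a^k * (1\<^sub>m P + strict_upper (C0m P m)) $$ (k,l)) = 1"
proof -
  have "(\<Sum>k<P. a^k * (1\<^sub>m P + strict_upper (C0m P m)) $$ (k,l))
      = (\<Sum>k<P. (if k = l then a^k else 0) + m * (if k < l then a^k else 0))"
    using l by (intro sum.cong refl) (simp add: IU_index algebra_simps)
  also have "\<dots> = a^l + m * (\<Sum>k<l. a^k)"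
    using l by (simp add: sum.distrib sum_distrib_left[symmetric] sum_lt)
  also have "\<dots> = 1" using geom[of a l] a by simp
  finally show ?thesis .
qed

lemma colsum_B0: assumes p: "p < P"
  shows "(\<Sum>l<P. B0m P m $$ (l,p)) = a^p"
proof -
  note B = B0m_props[of P m]
  have B0c: "B0m P m \<in> carrier_mat P P" using B by blast
  have "(\<Sum>l<P. B0m P m $$ (l,p)) = (\<Sum>l<P. (\<Sum>k<P. a^k * (1\<^sub>m P + strict_upper (C0m P m)) $$ (k,l)) * B0m P m $$ (l,p))"
    by (intro sum.cong refl) (simp add: row1)
  also have "\<dots> = (\<Sum>l<P. \<Sum>k<P. a^k * ((1\<^sub>m P + strict_upper (C0m P m)) $$ (k,l) * B0m P m $$ (l,p)))"
    by (simp add: sum_distrib_right mult.assoc)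
  also have "\<dots> = (\<Sum>k<P. a^k * (\<Sum>l<P. (1\<^sub>m P + strict_upper (C0m P m)) $$ (k,l) * B0m P m $$ (l,p)))"
    by (subst sum.swap) (simp add: sum_distrib_left)
  also have "\<dots> = (\<Sum>k<P. a^k * ((1\<^sub>m P + strict_upper (C0m P m)) * B0m P m) $$ (k,p))"
    by (rule sum.cong[OF refl], subst mm_index[OF IU_carrier B0c _ p]) auto
  also have "\<dots> = (\<Sum>k<P. if k = p then a^k else 0)"
    using p B by (intro sum.cong refl) auto
  also have "\<dots> = a^p" using p by simp
  finally show ?thesis .
qed

end

context
  fixes P :: nat and m a :: real
  assumes a: "a = 1 - m"
begin

lemma B0c: "B0m P m \<in> carrier_mat P P" using B0m_props by blast

lemma colsum_X0: assumes q: "q < P"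
  shows "(\<Sum>i<P. X0m P m $$ (i,q)) = a^P - a^(q+1)"
proof -
  have ent: "X0m P m $$ (i,q) = (if i = q then 1 else 0) - (\<Sum>k<P. B0m P m $$ (i,k) * C0m P m $$ (k,q))" if "i < P" for i
  proof -
    have "(B0m P m * C0m P m) $$ (i,q) = (\<Sum>k<P. B0m P m $$ (i,k) * C0m P m $$ (k,q))"
      by (rule mm_index[OF B0c C0_carrier that q])
    then show ?thesis unfolding X0m_def using that q B0c C0_carrier[of P m] by simp
  qed
  have "(\<Sum>i<P. X0m P m $$ (i,q)) = 1 - (\<Sum>i<P. \<Sum>k<P. B0m P m $$ (i,k) * C0m P m $$ (k,q))"
    using q by (simp add: ent sum_subtractf)
  also have "(\<Sum>i<P. \<Sum>k<P. B0m P m $$ (i,k) * C0m P m $$ (k,q)) = (\<Sum>k<P. (\<Sum>i<P. B0m P m $$ (i,k)) * C0m P m $$ (k,q))"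
    by (subst sum.swap) (simp add: sum_distrib_right)
  also have "\<dots> = (\<Sum>k<P. m * a^k + (if k = q then a^(k+1) else 0))"
    using q by (intro sum.cong refl) (simp add: colsum_B0[OF a] C0_index a algebra_simps)
  also have "\<dots> = m * (\<Sum>k<P. a^k) + a^(q+1)"
    using q by (simp add: sum.distrib sum_distrib_left)
  also have "m * (\<Sum>k<P. a^k) = 1 - a^P" using geom[of a P] a by simp
  finally show ?thesis by simp
qed


lemma v_eq: assumes k: "k < P"
  shows "(\<Sum>j<P. C0m P m $$ (k,j) * (a^P - a^(j+1))) = vfun P a k"
proof -
  have "(\<Sum>j<P. C0m P m $$ (k,j) * (a^P - a^(j+1))) = (\<Sum>j<P. (m + (if k = j then a else 0)) * (a^P - a^(j+1)))"
    using k by (intro sum.cong refl) (simp add: C0_index a)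
  also have "\<dots> = m * (\<Sum>j<P. (a^P - a^(j+1))) + a * (a^P - a^(k+1))" by (rule lin_apply[OF k])
  also have "(\<Sum>j<P. (a^P - a^(j+1))) = real P * a^P - a * (\<Sum>j<P. a^j)"
    by (simp add: sum_subtractf sum_distrib_left)
  also have "m * (real P * a ^ P - a * (\<Sum>j<P. a^j)) = (1 - a) * real P * a^P - a * (1 - a^P)"
  proof -
    have g: "m * (\<Sum>j<P. a^j) = 1 - a^P" using geom[of a P] a by simp
    have "m * (real P * a ^ P - a * (\<Sum>j<P. a^j)) = m * real P * a ^ P - a * (m * (\<Sum>j<P. a^j))"
      by (simp add: algebra_simps)
    also have "\<dots> = (1 - a) * real P * a^P - a * (1 - a^P)" unfolding g using a by simp
    finally show ?thesis .
  qed
  finally show ?thesis unfolding vfun_def by (simp add: algebra_simps)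
qed

lemma solve_eq: assumes k: "k < P" and a0: "1 + a \<noteq> 0"
  shows "(\<Sum>l<P. (1\<^sub>m P + strict_upper (C0m P m)) $$ (k,l) * (sN P a l / (1 + a))) = vfun P a k"
proof -
  have "(\<Sum>l<P. (1\<^sub>m P + strict_upper (C0m P m)) $$ (k,l) * (sN P a l / (1 + a)))
     = (\<Sum>l<P. (if k = l then sN P a l / (1 + a) else 0) + m * (if k < l then sN P a l / (1 + a) else 0))"
    using k by (intro sum.cong refl) (simp add: IU_index algebra_simps)
  also have "\<dots> = sN P a k / (1 + a) + m * (\<Sum>l\<in>{Suc k..<P}. sN P a l / (1 + a))"
    using k by (simp add: sum.distrib sum_distrib_left[symmetric] sum_gt)
  also have "m * (\<Sum>l\<in>{Suc k..<P}. sN P a l / (1 + a)) = FN P a (Suc k) / (1 + a)"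
    using tail_sum[of "Suc k" P a] k a by (simp add: sum_divide_distrib[symmetric])
  also have "sN P a k / (1 + a) + FN P a (Suc k) / (1 + a) = vfun P a k"
    using sN_eq[OF k, of a] a0 by (simp add: add_divide_distrib[symmetric] field_simps)
  finally show ?thesis .
qed

lemma s_eq: assumes q: "q < P" and a0: "1 + a \<noteq> 0"
  shows "(\<Sum>j<P. (B0m P m * C0m P m) $$ (q,j) * (a^P - a^(j+1))) = sN P a q / (1 + a)"
proof -
  note B = B0m_props[of P m]
  define sv where "sv = (\<lambda>l. sN P a l / (1 + a))"
  have "(\<Sum>j<P. (B0m P m * C0m P m) $$ (q,j) * (a^P - a^(j+1))) = (\<Sum>j<P. (\<Sum>k<P. B0m P m $$ (q,k) * C0m P m $$ (k,j)) * (a^P - a^(j+1)))"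
    by (rule sum.cong[OF refl], subst mm_index[OF B0c C0_carrier q]) auto
  also have "\<dots> = (\<Sum>k<P. B0m P m $$ (q,k) * (\<Sum>j<P. C0m P m $$ (k,j) * (a^P - a^(j+1))))"
    by (simp add: sum_distrib_left sum_distrib_right mult.assoc) (rule sum.swap)
  also have "\<dots> = (\<Sum>k<P. B0m P m $$ (q,k) * (\<Sum>l<P. (1\<^sub>m P + strict_upper (C0m P m)) $$ (k,l) * sv l))"
  proof -
    have vs: "(\<Sum>j<P. C0m P m $$ (k,j) * (a^P - a^(j+1))) = (\<Sum>l<P. (1\<^sub>m P + strict_upper (C0m P m)) $$ (k,l) * sv l)"
      if "k < P" for k using v_eq[OF that] solve_eq[OF that a0] unfolding sv_def by simp
    show ?thesis
    proof (rule sum.cong[OF refl])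
      fix k assume "k \<in> {..<P}"
      then have k: "k < P" by simp
      show "B0m P m $$ (q,k) * (\<Sum>j<P. C0m P m $$ (k,j) * (a^P - a^(j+1))) = B0m P m $$ (q,k) * (\<Sum>l<P. (1\<^sub>m P + strict_upper (C0m P m)) $$ (k,l) * sv l)"
        unfolding vs[OF k] ..
    qed
  qed
  also have "\<dots> = (\<Sum>l<P. (\<Sum>k<P. B0m P m $$ (q,k) * (1\<^sub>m P + strict_upper (C0m P m)) $$ (k,l)) * sv l)"
    by (simp add: sum_distrib_left sum_distrib_right mult.assoc) (rule sum.swap)
  also have "\<dots> = (\<Sum>l<P. (B0m P m * (1\<^sub>m P + strict_upper (C0m P m))) $$ (q,l) * sv l)"
    by (rule sum.cong[OF refl], subst mm_index[OF B0c IU_carrier q]) auto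
  also have "\<dots> = (\<Sum>l<P. if q = l then sv l else 0)"
    using B q by (intro sum.cong refl) auto
  also have "\<dots> = sN P a q / (1 + a)" using q unfolding sv_def by simp
  finally show ?thesis .
qed

end

lemma Gf_closed:
  fixes P \<mu> \<nu> :: nat and m :: real
  assumes m1: "-1 < m" and m2: "m < 1" and mu: "1 \<le> \<mu>" "\<mu> < \<nu>" "\<nu> \<le> P"
  shows "Gf P m 1 \<mu> \<nu> =
          (- ((1 - m) ^ (P + \<mu> - 1)) - (1 - m) ^ (P + \<nu> - 1)
           + (3 - m) / (2 - m) * (1 - m) ^ (\<mu> + \<nu> - 1))
          + (- ((1 - (1 - m) ^ P * (m * real P / (1 - m) + (3 - m) / (2 - m)))
             * (1 - m) ^ (P - (\<nu> - \<mu>))))"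
proof -
  define a where "a = 1 - m"
  have a: "a = 1 - m" by (rule a_def)
  have a0: "a > 0" and a1: "1 + a \<noteq> 0" using m1 m2 unfolding a_def by auto
  define p where "p = \<mu> - 1"
  define q where "q = \<nu> - 1"
  have pq: "p < q" "q < P" "\<mu> = p + 1" "\<nu> = q + 1" using mu unfolding p_def q_def by auto
  have H: "Hm P 1 (X0m P m) l j = a^P - a^(j+1)" if "j < P" for l j
    unfolding Hm_def using colsum_X0[OF a that] by simp
  have W2: "W2 P m 1 i j = (a^P - a^(j+1)) * a^i" if "i < P" "j < P" for i j
    unfolding W2_def using that by (simp add: H sum_distrib_left[symmetric] colsum_B0[OF a])
  have W1: "W1 P m 1 p q = a^p * (sN P a q / (1 + a))"
  proof -
    have "W1 P m 1 p q = (\<Sum>j<P. \<Sum>l<P. (a^P - a^(j+1)) * B0m P m $$ (l,p) * (B0m P m * C0m P m) $$ (q,j))"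
      unfolding W1_def by (intro sum.cong refl) (simp add: H)
    also have "\<dots> = (\<Sum>j<P. (B0m P m * C0m P m) $$ (q,j) * (a^P - a^(j+1)) * (\<Sum>l<P. B0m P m $$ (l,p)))"
      by (intro sum.cong refl) (simp add: sum_distrib_left sum_distrib_right mult_ac)
    also have "\<dots> = a^p * (\<Sum>j<P. (B0m P m * C0m P m) $$ (q,j) * (a^P - a^(j+1)))"
      using pq by (simp add: colsum_B0[OF a] sum_distrib_left mult_ac)
    also have "\<dots> = a^p * (sN P a q / (1 + a))" using s_eq[OF a pq(2) a1] by simp
    finally show ?thesis .
  qed
  obtain t d where td: "q = p + 1 + t" "P = q + 1 + d"
    using pq by (metis add.commute add_Suc less_iff_Suc_add plus_1_eq_Suc)
  have G: "Gf P m 1 \<mu> \<nu> = a^p * (sN P a q / (1 + a)) - (a^P - a^(q+1)) * a^p - (a^P - a^(p+1)) * a^q"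
    unfolding Gf_def using pq by (simp add: W1 W2)
  have ex: "P + \<mu> - 1 = p + p + t + d + 2" "P + \<nu> - 1 = p + p + t + t + d + 3" "\<mu> + \<nu> - 1 = p + p + t + 2"
    "P - (\<nu> - \<mu>) = p + d + 1" "P - q = d + 1" "2 * P - q - 1 = p + t + d + d + 2" "2 * P - q = p + t + d + d + 3"
    "q + 2 = p + t + 3" "q + 1 = p + t + 2" "p + t + d + d + 3 - 1 = p + t + d + d + 2"
    using td pq by auto
  have ex2: "q = p + t + 1" "P = p + t + d + 2" using td by auto
  have mm: "m = 1 - a" "3 - (1 - a) = 2 + a" "2 - (1 - a) = 1 + a" "1 - m = a" using a by auto
  define x where "x = a^p"
  define y where "y = a^t"
  define z where "z = a^d"
  have an: "a \<noteq> 0" using a0 by simp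
  have a2: "a + a * a \<noteq> 0" "a * (1 + a) \<noteq> 0" "a * a + a \<noteq> 0" "a + (a * (a * a) + a * (a * 2)) \<noteq> 0"
    "a + a * (a * a) + a * (a * 2) \<noteq> 0"
    using a0 by (auto simp: add_pos_pos) (smt (verit) mult_pos_pos)+
  show ?thesis
    apply (unfold G sN_def mm(4) ex)
    apply (unfold ex2 mm(1-3))
    apply (simp only: power_add power_one_right power_Suc)
    apply (unfold x_def[symmetric] y_def[symmetric] z_def[symmetric])
    using an a1 a2 apply (simp add: field_simps)
    apply (simp add: algebra_simps power2_eq_square power3_eq_cube)
    done
qed

theorem theorem2:
  fixes P :: nat and m \<rho>o :: real
  assumes "P \<ge> 2" and "-1 < m" and "m < 1"
    and "psd_mat P (Cout_mat P \<rho>o)"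
  shows "\<exists>G :: nat \<Rightarrow> nat \<Rightarrow> real.
     (\<rho>o = 1 \<longrightarrow> (\<forall>\<mu> \<nu>. 1 \<le> \<mu> \<and> \<mu> < \<nu> \<and> \<nu> \<le> P \<longrightarrow>
        G \<mu> \<nu> =
          (- ((1 - m) ^ (P + \<mu> - 1)) - (1 - m) ^ (P + \<nu> - 1)
           + (3 - m) / (2 - m) * (1 - m) ^ (\<mu> + \<nu> - 1))
          + (- ((1 - (1 - m) ^ P * (m * real P / (1 - m) + (3 - m) / (2 - m)))
             * (1 - m) ^ (P - (\<nu> - \<mu>)))))) \<and>
     (\<exists>K \<delta>0. \<delta>0 > 0 \<and>
        (\<forall>\<delta>m dM. 0 < \<delta>m \<and> \<delta>m < \<delta>0 \<and>
           (\<forall>\<mu> \<nu>. 1 \<le> \<mu> \<and> \<mu> < \<nu> \<and> \<nu> \<le> P \<longrightarrow> \<bar>dM \<mu> \<nu>\<bar> < \<delta>m) \<and>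
           correlation_mat P (Cin_mat P m dM) \<longrightarrow>
           \<bar>eps_f P (Cin_mat P m dM) (Cout_mat P \<rho>o)
             - eps_f P (Cin_mat P m (\<lambda>_ _. 0)) (Cout_mat P \<rho>o)
             - 2 * (\<Sum>\<mu>=1..P. \<Sum>\<nu>=\<mu>+1..P. G \<mu> \<nu> * dM \<mu> \<nu>)\<bar> \<le> K * \<delta>m^2))"
  proof -
  have P: "P > 0" using assms(1) by simp
  have l1: "1 - \<rho>o \<ge> 0" and l2: "1 + (real P - 1) * \<rho>o \<ge> 0" using Cout_lams[OF assms(1) assms(4)] by auto
  show ?thesis
    apply (rule exI[of _ "Gf P m \<rho>o"], rule conjI)
    using Gf_closed[OF assms(2) assms(3)] apply blast
    by (rule main_bound[OF P l1 l2])
qed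

end
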